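(* Let $c_1,c_2>0$ be constants and let $G$ be a $(2n,d,b)$-clustered regular graph with $\frac bd\le c_1n^{-1/2}$ and $\lambda\le c_2n^{-1/4}$. Consider the 2-Choices dynamics on $G$ started from an initial configuration in which each node $u\in V$ chooses a color in $\{red,blue\}$ uniformly at random and independently of the others. Then, with constant probability, within $\mathcal{O}(\log\log n)$ rounds the process reaches a configuration $\mathbf c^{(t)}$ such that $s^{(t)}_1\ge\sqrt n\log n$ and $-s^{(t)}_2\ge\sqrt n\log n$.
   Context: A $(2n,d,b)$-clustered regular graph is a graph $G=(V,E)$ with $V=V_1\cup V_2$ disjoint, $|V_1|=|V_2|=n$, every node of degree $d$, every node of $V_1$ having exactly $b$ neighbors in $V_2$ and vice versa; each $V_i$ induces a $(d-b)$-regular graph, assumed connected and non-bipartite. $\lambda:=\max(|\lambda_2|,|\lambda_n|,|\mu_2|,|\mu_n|)$, where $\lambda_1\ge\dots\ge\lambda_n$ and $\mu_1\ge\dots\ge\mu_n$ are the eigenvalues of the simple random walk transition matrices of the subgraphs induced by $V_1$ and $V_2$. $s^{(t)}_i$ is the number of red minus the number of blue nodes in $V_i$ at time $t$. 2-Choices dynamics: in each synchronous round every node independently samples two neighbors uniformly at random with replacement and, if both have the same color, adopts it; otherwise it keeps its color. "Constant probability" means probability at least a positive constant independent of $n$ (depending only on $c_1,c_2$); asymptotic notation refers to $n\to\infty$. *)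

theory Defs
  imports "HOL-Probability.Probability" "Jordan_Normal_Form.Char_Poly"
begin

definition nbrs :: "(nat \<Rightarrow> nat \<Rightarrow> bool) \<Rightarrow> nat set \<Rightarrow> nat \<Rightarrow> nat set" where
  "nbrs E S u = {v \<in> S. E u v}"

definition connected_on :: "(nat \<Rightarrow> nat \<Rightarrow> bool) \<Rightarrow> nat set \<Rightarrow> bool" where
  "connected_on E S \<longleftrightarrow> (\<forall>u\<in>S. \<forall>v\<in>S. (\<lambda>x y. x \<in> S \<and> y \<in> S \<and> E x y)\<^sup>*\<^sup>* u v)"

definition bipartite_on :: "(nat \<Rightarrow> nat \<Rightarrow> bool) \<Rightarrow> nat set \<Rightarrow> bool" where
  "bipartite_on E S \<longleftrightarrow> (\<exists>col :: nat \<Rightarrow> bool. \<forall>u\<in>S. \<forall>v\<in>S. E u v \<longrightarrow> col u \<noteq> col v)"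

definition clustered_regular ::
  "(nat \<Rightarrow> nat \<Rightarrow> bool) \<Rightarrow> nat set \<Rightarrow> nat set \<Rightarrow> nat \<Rightarrow> nat \<Rightarrow> nat \<Rightarrow> bool" where
  "clustered_regular E V1 V2 n d b \<longleftrightarrow>
     finite V1 \<and> finite V2 \<and> V1 \<inter> V2 = {} \<and> card V1 = n \<and> card V2 = n \<and>
     (\<forall>u v. E u v \<longrightarrow> u \<in> V1 \<union> V2 \<and> v \<in> V1 \<union> V2) \<and>
     (\<forall>u v. E u v \<longleftrightarrow> E v u) \<and> (\<forall>u. \<not> E u u) \<and>
     b \<le> d \<and>
     (\<forall>u\<in>V1 \<union> V2. card (nbrs E (V1 \<union> V2) u) = d) \<and>
     (\<forall>u\<in>V1. card (nbrs E V2 u) = b) \<and> (\<forall>u\<in>V2. card (nbrs E V1 u) = b) \<and>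
     (\<forall>u\<in>V1. card (nbrs E V1 u) = d - b) \<and> (\<forall>u\<in>V2. card (nbrs E V2 u) = d - b) \<and>
     connected_on E V1 \<and> connected_on E V2 \<and>
     \<not> bipartite_on E V1 \<and> \<not> bipartite_on E V2"

definition walk_matrix :: "(nat \<Rightarrow> nat \<Rightarrow> bool) \<Rightarrow> nat set \<Rightarrow> real mat" where
  "walk_matrix E S = (let vs = sorted_list_of_set S in
     mat (card S) (card S) (\<lambda>(i,j). if E (vs ! i) (vs ! j)
        then 1 / real (card (nbrs E S (vs ! i))) else 0))"

definition eigs_desc :: "real mat \<Rightarrow> real list" where
  "eigs_desc A = rev (sorted_list_of_multiset (proots (char_poly A)))"

(* \<lambda> := max(|\<lambda>_2|, |\<lambda>_n|, |\<mu>_2|, |\<mu>_n|) *)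
definition cluster_lambda :: "(nat \<Rightarrow> nat \<Rightarrow> bool) \<Rightarrow> nat set \<Rightarrow> nat set \<Rightarrow> real" where
  "cluster_lambda E V1 V2 = (let l = eigs_desc (walk_matrix E V1); m = eigs_desc (walk_matrix E V2) in
     Max {\<bar>l ! 1\<bar>, \<bar>last l\<bar>, \<bar>m ! 1\<bar>, \<bar>last m\<bar>})"

(* configurations: True = red, False = blue; nodes outside V are fixed to False *)
type_synonym config = "nat \<Rightarrow> bool"

definition init_config :: "nat set \<Rightarrow> config pmf" where
  "init_config V = Pi_pmf V False (\<lambda>_. pmf_of_set {True, False})"

definition two_choices_step :: "(nat \<Rightarrow> nat \<Rightarrow> bool) \<Rightarrow> nat set \<Rightarrow> config \<Rightarrow> config pmf" where
  "two_choices_step E V c = Pi_pmf V False (\<lambda>u.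
     do { x \<leftarrow> pmf_of_set (nbrs E V u);
          y \<leftarrow> pmf_of_set (nbrs E V u);
          return_pmf (if c x = c y then c x else c u) })"

fun trajectory :: "(nat \<Rightarrow> nat \<Rightarrow> bool) \<Rightarrow> nat set \<Rightarrow> nat \<Rightarrow> config list pmf" where
  "trajectory E V 0 = map_pmf (\<lambda>c. [c]) (init_config V)"
| "trajectory E V (Suc t) = trajectory E V t \<bind>
     (\<lambda>cs. map_pmf (\<lambda>c'. cs @ [c']) (two_choices_step E V (last cs)))"

definition bias :: "nat set \<Rightarrow> config \<Rightarrow> int" where
  "bias S c = int (card {u \<in> S. c u}) - int (card {u \<in> S. \<not> c u})"

end

theory Submission
  imports Defs "HOL-Real_Asymp.Real_Asymp"
begin

definition Rop :: "(nat \<Rightarrow> nat \<Rightarrow> real) \<Rightarrow> nat set \<Rightarrow> (nat \<Rightarrow> real) \<Rightarrow> nat \<Rightarrow> real" where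
  "Rop a S x u = (\<Sum>v\<in>S. a u v * x v)"

definition Fq :: "(nat \<Rightarrow> nat \<Rightarrow> real) \<Rightarrow> nat set \<Rightarrow> (nat \<Rightarrow> real) \<Rightarrow> real" where
  "Fq a S x = (\<Sum>u\<in>S. (Rop a S x u)^2)"

lemma Fq_cong: "(\<And>u. u \<in> S \<Longrightarrow> x u = y u) \<Longrightarrow> Fq a S x = Fq a S y"
  unfolding Fq_def Rop_def by (intro sum.cong refl) (simp)

lemma compact_max:
  assumes fin: "finite S" and ne: "S \<noteq> {}"
  shows "\<exists>w. (\<Sum>u\<in>S. (w u)^2) = 1 \<and> (\<forall>x. (\<Sum>u\<in>S. (x u)^2) = 1 \<longrightarrow> Fq a S x \<le> Fq a S w)"
proof -
  let ?T = "product_topology (\<lambda>_. euclideanreal) S"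
  let ?K = "{x \<in> topspace ?T. (\<Sum>u\<in>S. (x u)^2) = 1}"
  have cq: "continuous_map ?T euclideanreal (\<lambda>x. (\<Sum>u\<in>S. (x u)^2))"
    by (intro continuous_map_sum continuous_map_real_pow continuous_map_product_projection fin) auto
  have cF: "continuous_map ?T euclideanreal (Fq a S)"
    unfolding Fq_def Rop_def
    by (intro continuous_map_sum continuous_map_real_pow continuous_map_real_mult
          continuous_map_product_projection fin) auto
  have cl: "closedin ?T ?K"
    using closedin_continuous_map_preimage[OF cq, of "{1}"] by simp
  have box: "compactin ?T (PiE S (\<lambda>_. {-1..1}))"
    by (subst compactin_PiE) auto
  have sub: "?K \<subseteq> PiE S (\<lambda>_. {-1..1})"
  proof
    fix x assume x: "x \<in> ?K"
    have "\<bar>x u\<bar> \<le> 1" if "u \<in> S" for u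
    proof -
      have "(x u)^2 \<le> (\<Sum>u\<in>S. (x u)^2)"
        using that fin by (intro member_le_sum) auto
      then have "(x u)^2 \<le> 1" using x by simp
      then show ?thesis by (simp add: abs_square_le_1)
    qed
    then show "x \<in> PiE S (\<lambda>_. {-1..1})" using x by (auto simp: PiE_iff abs_le_iff)
  qed
  have cK: "compactin ?T ?K"
    by (rule closed_compactin[OF box sub cl])
  have "compactin euclideanreal (Fq a S ` ?K)"
    by (rule image_compactin[OF cK cF])
  then have cpt: "compact (Fq a S ` ?K)" by simp
  obtain u0 where u0: "u0 \<in> S" using ne by auto
  define e where "e = (\<lambda>u. if u \<in> S then (if u = u0 then 1 else 0) else (undefined::real))"
  have "(\<Sum>u\<in>S. (e u)^2) = (\<Sum>u\<in>S. if u = u0 then 1 else 0)"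
    by (intro sum.cong) (auto simp: e_def)
  also have "\<dots> = 1" using fin u0 by simp
  finally have "e \<in> ?K" by (auto simp: e_def PiE_iff extensional_def)
  then have "Fq a S ` ?K \<noteq> {}" by auto
  from compact_attains_sup[OF cpt this] obtain w where w: "w \<in> ?K" and
    mx: "\<forall>t \<in> Fq a S ` ?K. t \<le> Fq a S w" by auto
  show ?thesis
  proof (intro exI conjI allI impI)
    show "(\<Sum>u\<in>S. (w u)^2) = 1" using w by simp
    fix x :: "nat \<Rightarrow> real" assume x: "(\<Sum>u\<in>S. (x u)^2) = 1"
    define x' where "x' = (\<lambda>u. if u \<in> S then x u else (undefined::real))"
    have "(\<Sum>u\<in>S. (x' u)^2) = (\<Sum>u\<in>S. (x u)^2)" by (intro sum.cong) (auto simp: x'_def)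
    then have "x' \<in> ?K" using x by (auto simp: x'_def PiE_iff extensional_def)
    then have "Fq a S x' \<le> Fq a S w" using mx by auto
    moreover have "Fq a S x' = Fq a S x" by (rule Fq_cong) (simp add: x'_def)
    ultimately show "Fq a S x \<le> Fq a S w" by simp
  qed
qed

lemma Rop_lin: "Rop a S (\<lambda>v. x v + t * y v) u = Rop a S x u + t * Rop a S y u"
  unfolding Rop_def by (simp add: algebra_simps sum.distrib sum_distrib_left)

lemma Rop_scale: "Rop a S (\<lambda>v. t * y v) u = t * Rop a S y u"
  unfolding Rop_def by (simp add: algebra_simps sum_distrib_left)

lemma Rop_sym:
  assumes "\<And>u v. a u v = a v u"
  shows "(\<Sum>u\<in>S. Rop a S x u * y u) = (\<Sum>u\<in>S. x u * Rop a S y u)"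
proof -
  have "(\<Sum>u\<in>S. Rop a S x u * y u) = (\<Sum>u\<in>S. \<Sum>v\<in>S. a u v * x v * y u)"
    unfolding Rop_def by (simp add: sum_distrib_right)
  also have "\<dots> = (\<Sum>v\<in>S. \<Sum>u\<in>S. a u v * x v * y u)" by (rule sum.swap)
  also have "\<dots> = (\<Sum>v\<in>S. x v * Rop a S y v)"
    unfolding Rop_def by (simp add: sum_distrib_left assms mult.commute mult.left_commute)
  finally show ?thesis .
qed

lemma quad_zero:
  fixes \<alpha> \<beta> :: real
  assumes all: "\<And>t. 2 * t * \<alpha> + t^2 * \<beta> \<le> 0" and a: "\<alpha> \<ge> 0"
  shows "\<alpha> = 0"
proof (rule ccontr)
  assume "\<alpha> \<noteq> 0"
  with a have ap: "\<alpha> > 0" by simp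
  define t where "t = \<alpha> / (\<bar>\<beta>\<bar> + 1)"
  have tp: "t > 0" using ap by (simp add: t_def add_pos_nonneg)
  have "t * (\<bar>\<beta>\<bar> + 1) = \<alpha>" by (simp add: t_def)
  have "t * \<beta> \<ge> - t * \<bar>\<beta>\<bar>" using tp mult_left_mono[of "-\<bar>\<beta>\<bar>" \<beta> t] by simp
  then have "2 * \<alpha> + t * \<beta> > 0"
    using \<open>t * (\<bar>\<beta>\<bar> + 1) = \<alpha>\<close> tp ap by (simp add: algebra_simps)
  then have "t * (2 * \<alpha> + t * \<beta>) > 0" using tp by simp
  moreover have "t * (2 * \<alpha> + t * \<beta>) = 2 * t * \<alpha> + t^2 * \<beta>" by (simp add: power2_eq_square algebra_simps)
  ultimately show False using all[of t] by simp
qed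

lemma rayleigh:
  assumes fin: "finite S" and ne: "S \<noteq> {}" and sym: "\<And>u v. a u v = a v u"
  shows "\<exists>w M. (\<Sum>u\<in>S. (w u)^2) = 1 \<and> M \<ge> 0 \<and> (\<forall>x. Fq a S x \<le> M * (\<Sum>u\<in>S. (x u)^2)) \<and>
     (\<forall>u\<in>S. Rop a S (Rop a S w) u = M * w u)"
proof -
  obtain w where w1: "(\<Sum>u\<in>S. (w u)^2) = 1" and
    mx: "\<And>x. (\<Sum>u\<in>S. (x u)^2) = 1 \<Longrightarrow> Fq a S x \<le> Fq a S w"
    using compact_max[OF fin ne, of a] by blast
  define M where "M = Fq a S w"
  have M0: "M \<ge> 0" unfolding M_def Fq_def by (intro sum_nonneg) auto
  have bnd: "Fq a S x \<le> M * (\<Sum>u\<in>S. (x u)^2)" for x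
  proof (cases "(\<Sum>u\<in>S. (x u)^2) = 0")
    case True
    then have "\<forall>u\<in>S. x u = 0" using fin by (simp add: sum_nonneg_eq_0_iff)
    then have "Fq a S x = 0" unfolding Fq_def Rop_def by simp
    then show ?thesis using True by simp
  next
    case False
    define q where "q = (\<Sum>u\<in>S. (x u)^2)"
    have qp: "q > 0" using False unfolding q_def by (metis less_eq_real_def sum_nonneg zero_le_power2)
    define x' where "x' = (\<lambda>v. (1 / sqrt q) * x v)"
    have "(\<Sum>u\<in>S. (x' u)^2) = (\<Sum>u\<in>S. (x u)^2 / q)"
      unfolding x'_def using qp by (intro sum.cong) (auto simp: power_mult_distrib power_divide)
    also have "\<dots> = 1" using qp by (simp add: q_def[symmetric] sum_divide_distrib[symmetric])
    finally have "Fq a S x' \<le> M" using mx unfolding M_def by blast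
    moreover have "Fq a S x' = Fq a S x / q"
      unfolding Fq_def x'_def Rop_scale using qp
      by (simp add: power_mult_distrib power_divide sum_divide_distrib)
    ultimately have "Fq a S x / q \<le> M" by simp
    then show ?thesis using qp by (simp add: q_def[symmetric] divide_le_eq mult.commute)
  qed
  define z where "z = (\<lambda>u. Rop a S (Rop a S w) u - M * w u)"
  have key: "2 * t * (\<Sum>u\<in>S. (z u)^2) + t^2 * (Fq a S z - M * (\<Sum>u\<in>S. (z u)^2)) \<le> 0" for t
  proof -
    have "Fq a S (\<lambda>v. w v + t * z v) \<le> M * (\<Sum>u\<in>S. (w u + t * z u)^2)" by (rule bnd)
    moreover have "Fq a S (\<lambda>v. w v + t * z v) =
        M + 2 * t * (\<Sum>u\<in>S. Rop a S z u * Rop a S w u) + t^2 * Fq a S z"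
      unfolding Fq_def Rop_lin M_def
      by (simp add: power2_sum sum.distrib sum_distrib_left power_mult_distrib algebra_simps)
    moreover have "(\<Sum>u\<in>S. (w u + t * z u)^2) = 1 + 2 * t * (\<Sum>u\<in>S. z u * w u) + t^2 * (\<Sum>u\<in>S. (z u)^2)"
      using w1 by (simp add: power2_sum sum.distrib sum_distrib_left power_mult_distrib algebra_simps)
    moreover have "(\<Sum>u\<in>S. Rop a S z u * Rop a S w u) = (\<Sum>u\<in>S. z u * Rop a S (Rop a S w) u)"
      by (rule Rop_sym[OF sym])
    moreover have "(\<Sum>u\<in>S. z u * Rop a S (Rop a S w) u) - M * (\<Sum>u\<in>S. z u * w u) = (\<Sum>u\<in>S. (z u)^2)"
      unfolding z_def by (simp add: power2_eq_square sum_distrib_left sum_subtractf[symmetric] algebra_simps)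
    ultimately show ?thesis by (simp add: algebra_simps)
  qed
  have "(\<Sum>u\<in>S. (z u)^2) = 0"
    by (rule quad_zero[OF key]) (auto intro: sum_nonneg)
  then have "\<forall>u\<in>S. z u = 0" using fin by (simp add: sum_nonneg_eq_0_iff)
  then have ev: "\<forall>u\<in>S. Rop a S (Rop a S w) u = M * w u" unfolding z_def by simp
  show ?thesis using w1 M0 bnd ev by blast
qed

locale regS =
  fixes E :: "nat \<Rightarrow> nat \<Rightarrow> bool" and S :: "nat set" and D :: nat
  assumes finS: "finite S" and symE: "\<And>u v. E u v = E v u"
    and regD: "\<And>u. u \<in> S \<Longrightarrow> card (nbrs E S u) = D" and Dpos: "D > 0"
begin

definition Pop :: "(nat \<Rightarrow> real) \<Rightarrow> nat \<Rightarrow> real" where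
  "Pop x u = (\<Sum>v\<in>nbrs E S u. x v) / real D"

definition pk :: "nat \<Rightarrow> nat \<Rightarrow> real" where
  "pk u v = (if E u v then 1 / real D else 0)"

definition rk :: "nat \<Rightarrow> nat \<Rightarrow> real" where
  "rk u v = pk u v - 1 / real (card S)"

lemma pk_sym: "pk u v = pk v u" unfolding pk_def using symE by simp
lemma rk_sym: "rk u v = rk v u" unfolding rk_def using pk_sym by simp

lemma Pop_Rop: "Pop x u = Rop pk S x u"
proof -
  have "(\<Sum>v\<in>nbrs E S u. x v) = (\<Sum>v\<in>S. if E u v then x v else 0)"
    unfolding nbrs_def using finS by (simp add: sum.inter_filter)
  moreover have "Rop pk S x u = (\<Sum>v\<in>S. if E u v then x v else 0) / real D"
    unfolding Rop_def pk_def sum_divide_distrib by (intro sum.cong refl) auto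
  ultimately show ?thesis unfolding Pop_def by simp
qed

lemma Pop_one: "u \<in> S \<Longrightarrow> Pop (\<lambda>_. 1) u = 1"
  unfolding Pop_def using regD Dpos by simp

lemma sum_Pop: "(\<Sum>u\<in>S. Pop x u) = (\<Sum>u\<in>S. x u)"
proof -
  have "(\<Sum>u\<in>S. Pop x u) = (\<Sum>u\<in>S. Rop pk S x u * 1)" by (simp add: Pop_Rop)
  also have "\<dots> = (\<Sum>u\<in>S. x u * Rop pk S (\<lambda>_. 1) u)" by (rule Rop_sym[of pk, OF pk_sym])
  also have "\<dots> = (\<Sum>u\<in>S. x u)"
    by (intro sum.cong refl) (simp add: Pop_one Pop_Rop[symmetric])
  finally show ?thesis .
qed

lemma Rop_rk: "Rop rk S x u = Pop x u - (\<Sum>v\<in>S. x v) / real (card S)"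
  unfolding Pop_Rop Rop_def rk_def by (simp add: algebra_simps sum_subtractf sum_divide_distrib)

lemma sum_Rop_rk: "(\<Sum>u\<in>S. Rop rk S x u) = 0"
proof -
  have "(\<Sum>u\<in>S. Rop rk S x u) = (\<Sum>u\<in>S. Pop x u) - real (card S) * ((\<Sum>v\<in>S. x v) / real (card S))"
    by (simp add: Rop_rk sum_subtractf)
  also have "\<dots> = 0"
    using finS by (cases "S = {}") (simp_all add: sum_Pop)
  finally show ?thesis .
qed

lemma sumsq_Pop:
  "(\<Sum>u\<in>S. (Pop x u)^2) = Fq rk S x + (\<Sum>u\<in>S. x u)^2 / real (card S)"
proof -
  define m where "m = (\<Sum>v\<in>S. x v) / real (card S)"
  have "(\<Sum>u\<in>S. (Pop x u)^2) = (\<Sum>u\<in>S. (Rop rk S x u + m)^2)"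
    by (simp add: Rop_rk m_def)
  also have "\<dots> = Fq rk S x + 2 * m * (\<Sum>u\<in>S. Rop rk S x u) + real (card S) * m^2"
    unfolding Fq_def by (simp add: power2_sum sum.distrib sum_distrib_left algebra_simps)
  also have "\<dots> = Fq rk S x + (\<Sum>u\<in>S. x u)^2 / real (card S)"
    using finS by (cases "S = {}") (simp_all add: sum_Rop_rk m_def power2_eq_square)
  finally show ?thesis .
qed

lemma spec_bound:
  assumes ne: "S \<noteq> {}"
    and eig: "\<And>z \<mu>. (\<forall>u\<in>S. Pop z u = \<mu> * z u) \<Longrightarrow> (\<Sum>u\<in>S. z u) = 0 \<Longrightarrow> (\<exists>u\<in>S. z u \<noteq> 0) \<Longrightarrow> \<bar>\<mu>\<bar> \<le> Lam"
    and L0: "Lam \<ge> 0"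
  shows "(\<Sum>u\<in>S. (Pop x u)^2) \<le> (\<Sum>u\<in>S. x u)^2 / real (card S) + Lam^2 * (\<Sum>u\<in>S. (x u)^2)"
proof -
  obtain w M where w1: "(\<Sum>u\<in>S. (w u)^2) = 1" and M0: "M \<ge> 0"
    and bnd: "\<And>x. Fq rk S x \<le> M * (\<Sum>u\<in>S. (x u)^2)"
    and ev: "\<And>u. u \<in> S \<Longrightarrow> Rop rk S (Rop rk S w) u = M * w u"
    using rayleigh[of S rk, OF finS ne rk_sym] by blast
  have MLe: "M \<le> Lam^2"
  proof (cases "M = 0")
    case True then show ?thesis by simp
  next
    case False
    then have Mp: "M > 0" using M0 by simp
    define r where "r = sqrt M"
    have rp: "r > 0" using Mp by (simp add: r_def)
    have rr: "r * r = M" using M0 by (simp add: r_def)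
    have "\<exists>z \<mu>. (\<forall>u\<in>S. Rop rk S z u = \<mu> * z u) \<and> (\<exists>u\<in>S. z u \<noteq> 0) \<and> \<mu>^2 = M"
    proof (cases "\<exists>u\<in>S. Rop rk S w u + r * w u \<noteq> 0")
      case True
      define y where "y = (\<lambda>u. Rop rk S w u + r * w u)"
      have "\<forall>u\<in>S. Rop rk S y u = r * y u"
      proof
        fix u assume u: "u \<in> S"
        have "Rop rk S y u = Rop rk S (Rop rk S w) u + r * Rop rk S w u"
          unfolding y_def by (rule Rop_lin)
        also have "\<dots> = r * y u" using ev[OF u] rr by (simp add: y_def algebra_simps)
        finally show "Rop rk S y u = r * y u" .
      qed
      then show ?thesis using True rr by (intro exI[of _ y] exI[of _ r]) (auto simp: y_def power2_eq_square)
    next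
      case False
      then have "\<forall>u\<in>S. Rop rk S w u = (-r) * w u" by auto
      moreover have "\<exists>u\<in>S. w u \<noteq> 0"
      proof (rule ccontr)
        assume "\<not> ?thesis"
        then have "(\<Sum>u\<in>S. (w u)^2) = 0" by simp
        then show False using w1 by simp
      qed
      ultimately show ?thesis using rr by (intro exI[of _ w] exI[of _ "-r"]) (auto simp: power2_eq_square)
    qed
    then obtain z \<mu> where zev: "\<forall>u\<in>S. Rop rk S z u = \<mu> * z u" and znz: "\<exists>u\<in>S. z u \<noteq> 0"
      and mu2: "\<mu>^2 = M" by blast
    have mune: "\<mu> \<noteq> 0" using mu2 Mp by auto
    have "\<mu> * (\<Sum>u\<in>S. z u) = (\<Sum>u\<in>S. Rop rk S z u)"
      using zev by (simp add: sum_distrib_left)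
    also have "\<dots> = 0" by (rule sum_Rop_rk)
    finally have sz: "(\<Sum>u\<in>S. z u) = 0" using mune by simp
    have "\<forall>u\<in>S. Pop z u = \<mu> * z u" using zev sz by (simp add: Rop_rk)
    then have "\<bar>\<mu>\<bar> \<le> Lam" using eig sz znz by blast
    then have "\<bar>\<mu>\<bar>^2 \<le> Lam^2" by (intro power_mono) auto
    then show ?thesis using mu2 by (simp add: power2_abs)
  qed
  have "Fq rk S x \<le> Lam^2 * (\<Sum>u\<in>S. (x u)^2)"
    using bnd[of x] MLe by (meson mult_right_mono order.trans sum_nonneg zero_le_power2)
  then show ?thesis by (simp add: sumsq_Pop)
qed

end

lemma sorted_list_bound:
  fixes L :: "real list"
  assumes s: "sorted L" and x: "x \<in> set L" and y: "y \<in> set L" and xy: "x < y"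
  shows "x \<le> rev L ! 1 \<and> last (rev L) \<le> x"
proof -
  obtain j where j: "j < length L" "L ! j = x" using x by (auto simp: in_set_conv_nth)
  obtain k where k: "k < length L" "L ! k = y" using y by (auto simp: in_set_conv_nth)
  have jk: "j < k"
  proof (rule ccontr)
    assume "\<not> j < k"
    then have "L ! k \<le> L ! j" using sorted_nth_mono[OF s, of k j] j by simp
    then show False using j k xy by simp
  qed
  have len: "length L \<ge> 2" using jk k by simp
  have r1: "rev L ! 1 = L ! (length L - 2)" using len by (simp add: rev_nth numeral_2_eq_2)
  have "L ! j \<le> L ! (length L - 2)" using jk k by (intro sorted_nth_mono[OF s]) auto
  moreover have "last (rev L) = L ! 0"
  proof -
    have "L \<noteq> []" using len by auto
    then show ?thesis by (simp add: last_rev hd_conv_nth)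
  qed
  moreover have "L ! 0 \<le> L ! j" using j by (intro sorted_nth_mono[OF s]) auto
  ultimately show ?thesis using r1 j by simp
qed

lemma eigs_desc_bound:
  assumes "(1::real) \<in> set (eigs_desc A)" "\<mu> \<in> set (eigs_desc A)" "\<mu> < 1"
  shows "\<bar>\<mu>\<bar> \<le> max \<bar>eigs_desc A ! 1\<bar> \<bar>last (eigs_desc A)\<bar>"
proof -
  let ?L = "sorted_list_of_multiset (proots (char_poly A))"
  have "\<mu> \<le> rev ?L ! 1 \<and> last (rev ?L) \<le> \<mu>"
    using sorted_list_bound[of ?L \<mu> 1] assms by (simp add: eigs_desc_def)
  then show ?thesis unfolding eigs_desc_def by linarith
qed

context regS
begin

lemma walk_root:
  assumes ev: "\<forall>u\<in>S. Pop z u = \<mu> * z u" and nz: "\<exists>u\<in>S. z u \<noteq> 0"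
  shows "\<mu> \<in> set (eigs_desc (walk_matrix E S))"
proof -
  define vs where "vs = sorted_list_of_set S"
  define n where "n = card S"
  define A where "A = walk_matrix E S"
  have dvs: "distinct vs" and svs: "set vs = S" and lvs: "length vs = n"
    using finS by (auto simp: vs_def n_def)
  have bij: "bij_betw ((!) vs) {..<n} S" by (rule bij_betw_nth) (use dvs svs lvs in auto)
  have A: "A \<in> carrier_mat n n" by (simp add: A_def walk_matrix_def Let_def n_def)
  have Aij: "A $$ (i,j) = (if E (vs ! i) (vs ! j) then 1 / real D else 0)" if "i < n" "j < n" for i j
  proof -
    have "vs ! i \<in> S" using that svs lvs by auto
    then show ?thesis using that by (simp add: A_def walk_matrix_def Let_def vs_def[symmetric] n_def[symmetric] regD)
  qed
  define v where "v = vec n (\<lambda>i. z (vs ! i))"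
  have v: "v \<in> carrier_vec n" by (simp add: v_def)
  have Av: "A *\<^sub>v v = \<mu> \<cdot>\<^sub>v v"
  proof (rule eq_vecI)
    fix i assume "i < dim_vec (\<mu> \<cdot>\<^sub>v v)"
    then have i: "i < n" by (simp add: v_def)
    have "(A *\<^sub>v v) $ i = (\<Sum>j\<in>{0..<n}. A $$ (i,j) * z (vs ! j))"
      using A i by (simp add: scalar_prod_def v_def)
    also have "\<dots> = (\<Sum>j\<in>{..<n}. pk (vs ! i) (vs ! j) * z (vs ! j))"
      using i by (intro sum.cong) (auto simp: Aij pk_def)
    also have "\<dots> = (\<Sum>w\<in>S. pk (vs ! i) w * z w)"
      by (rule sum.reindex_bij_betw[OF bij, of "\<lambda>w. pk (vs ! i) w * z w"])
    also have "\<dots> = Pop z (vs ! i)" by (simp add: Pop_Rop Rop_def)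
    also have "\<dots> = \<mu> * z (vs ! i)" using ev i svs lvs by auto
    finally show "(A *\<^sub>v v) $ i = (\<mu> \<cdot>\<^sub>v v) $ i" using i by (simp add: v_def)
  qed (use A in \<open>simp add: v_def\<close>)
  have vnz: "v \<noteq> 0\<^sub>v n"
  proof
    assume v0: "v = 0\<^sub>v n"
    obtain u where u: "u \<in> S" "z u \<noteq> 0" using nz by auto
    then obtain i where i: "i < n" "vs ! i = u" using svs lvs by (auto simp: in_set_conv_nth)
    have "v $ i = 0" using v0 i by simp
    then show False using i u by (simp add: v_def)
  qed
  have "eigenvector A v \<mu>" unfolding eigenvector_def using A v vnz Av by auto
  then have "eigenvalue A \<mu>" unfolding eigenvalue_def by blast
  then have root: "poly (char_poly A) \<mu> = 0" using eigenvalue_root_char_poly[OF A] by simp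
  have "char_poly A \<noteq> 0" using degree_monic_char_poly[OF A] by auto
  then have "\<mu> \<in># proots (char_poly A)" using root by simp
  then show ?thesis by (simp add: eigs_desc_def A_def)
qed

lemma one_root:
  assumes "S \<noteq> {}"
  shows "(1::real) \<in> set (eigs_desc (walk_matrix E S))"
  using walk_root[of "\<lambda>_. 1" 1] Pop_one assms by auto

lemma max_principle:
  assumes conn: "connected_on E S" and ev: "\<forall>u\<in>S. Pop z u = z u" and sz: "(\<Sum>u\<in>S. z u) = 0"
  shows "\<forall>u\<in>S. z u = 0"
proof (cases "S = {}")
  case True then show ?thesis by simp
next
  case ne: False
  define m where "m = Max (z ` S)"
  have mS: "m \<in> z ` S" unfolding m_def using finS ne by simp
  then obtain u0 where u0: "u0 \<in> S" "z u0 = m" by auto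
  have le: "z v \<le> m" if "v \<in> S" for v unfolding m_def using finS that by simp
  have stepm: "z v = m" if "z u = m" "u \<in> S" "v \<in> S" "E u v" for u v
  proof -
    have fin': "finite (nbrs E S u)" using finS by (simp add: nbrs_def)
    have "(\<Sum>w\<in>nbrs E S u. z w) = real D * z u"
      using ev that(2) Dpos by (simp add: Pop_def field_simps)
    then have "(\<Sum>w\<in>nbrs E S u. m - z w) = 0"
      using that(1,2) regD by (simp add: sum_subtractf)
    moreover have "\<forall>w\<in>nbrs E S u. m - z w \<ge> 0" using le by (auto simp: nbrs_def)
    ultimately have "\<forall>w\<in>nbrs E S u. m - z w = 0" using fin' by (simp add: sum_nonneg_eq_0_iff)
    moreover have "v \<in> nbrs E S u" using that by (simp add: nbrs_def)
    ultimately show ?thesis by simp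
  qed
  have allm: "z v = m" if v: "v \<in> S" for v
  proof -
    have "(\<lambda>x y. x \<in> S \<and> y \<in> S \<and> E x y)\<^sup>*\<^sup>* u0 v" using conn u0 v unfolding connected_on_def by blast
    then show ?thesis
    proof (induction rule: rtranclp_induct)
      case base then show ?case using u0 by simp
    next
      case (step y w) then show ?case using stepm[of y w] by blast
    qed
  qed
  have "(\<Sum>u\<in>S. z u) = real (card S) * m" using allm by simp
  then have "m = 0" using sz finS ne by simp
  then show ?thesis using allm by simp
qed

lemma abs_eig_le1:
  assumes ev: "\<forall>u\<in>S. Pop z u = \<mu> * z u" and nz: "\<exists>u\<in>S. z u \<noteq> 0"
  shows "\<bar>\<mu>\<bar> \<le> 1"
proof -
  have ne: "S \<noteq> {}" using nz by auto
  define m where "m = Max ((\<lambda>u. \<bar>z u\<bar>) ` S)"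
  obtain u0 where u0: "u0 \<in> S" "\<bar>z u0\<bar> = m" using finS ne
    by (metis (no_types, lifting) Max_in m_def empty_is_image finite_imageI imageE)
  have le: "\<bar>z v\<bar> \<le> m" if "v \<in> S" for v unfolding m_def using finS that by simp
  have mp: "m > 0"
  proof -
    obtain u where "u \<in> S" "z u \<noteq> 0" using nz by auto
    then show ?thesis using le[of u] by simp
  qed
  have fin': "finite (nbrs E S u0)" using finS by (simp add: nbrs_def)
  have "\<bar>\<Sum>w\<in>nbrs E S u0. z w\<bar> \<le> (\<Sum>w\<in>nbrs E S u0. \<bar>z w\<bar>)" by (rule sum_abs)
  also have "\<dots> \<le> (\<Sum>w\<in>nbrs E S u0. m)" by (intro sum_mono) (auto simp: nbrs_def le)
  also have "\<dots> = real D * m" using regD u0 by simp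
  finally have "\<bar>Pop z u0\<bar> \<le> m" using Dpos by (simp add: Pop_def divide_le_eq mult.commute)
  then have "\<bar>\<mu>\<bar> * m \<le> m" using ev u0 by (simp add: abs_mult)
  then show ?thesis using mp by simp
qed

lemma eig_bound:
  assumes conn: "connected_on E S"
    and ev: "\<forall>u\<in>S. Pop z u = \<mu> * z u" and sz: "(\<Sum>u\<in>S. z u) = 0" and nz: "\<exists>u\<in>S. z u \<noteq> 0"
  shows "\<bar>\<mu>\<bar> \<le> max \<bar>eigs_desc (walk_matrix E S) ! 1\<bar> \<bar>last (eigs_desc (walk_matrix E S))\<bar>"
proof -
  have "\<mu> \<noteq> 1"
  proof
    assume "\<mu> = 1"
    then have "\<forall>u\<in>S. z u = 0" using max_principle[OF conn _ sz] ev by simp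
    then show False using nz by simp
  qed
  moreover have "\<bar>\<mu>\<bar> \<le> 1" by (rule abs_eig_le1[OF ev nz])
  ultimately have "\<mu> < 1" by simp
  moreover have "S \<noteq> {}" using nz by auto
  ultimately show ?thesis
    using eigs_desc_bound one_root walk_root[OF ev nz] by blast
qed

end

lemma hoeff_Pi:
  fixes h :: "bool \<Rightarrow> real"
  assumes finV: "finite V" and SV: "S \<subseteq> V" and ne: "S \<noteq> {}"
    and hb: "\<And>x. h x \<in> {-1..1}" and eps: "\<epsilon> \<ge> 0"
  shows "measure_pmf.prob (Pi_pmf V dflt K)
           {c. (\<Sum>u\<in>S. h (c u)) \<le> (\<Sum>u\<in>S. measure_pmf.expectation (K u) h) - \<epsilon>}
         \<le> exp (- (\<epsilon>^2) / (2 * real (card S)))"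
proof -
  let ?P = "Pi_pmf V dflt K"
  have finS: "finite S" using finV SV finite_subset by blast
  have ind0: "prob_space.indep_vars (measure_pmf ?P) (\<lambda>_. count_space UNIV) (\<lambda>x f. f x) S"
    using prob_space.indep_vars_subset[OF measure_pmf.prob_space_axioms indep_vars_Pi_pmf[OF finV] SV] .
  have ind: "prob_space.indep_vars (measure_pmf ?P) (\<lambda>_. borel) (\<lambda>u c. h (c u)) S"
    by (intro prob_space.indep_vars_compose2[OF measure_pmf.prob_space_axioms ind0]) auto
  interpret H: Hoeffding_ineq "measure_pmf ?P" S "\<lambda>u c. h (c u)" "\<lambda>_. -1" "\<lambda>_. 1"
     "\<Sum>u\<in>S. measure_pmf.expectation ?P (\<lambda>c. h (c u))"
    by unfold_locales (use finS ind hb in \<open>auto simp: measure_pmf.prob_space_axioms\<close>)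
  have eqE: "measure_pmf.expectation ?P (\<lambda>c. h (c u)) = measure_pmf.expectation (K u) h" if "u \<in> S" for u
  proof -
    have "measure_pmf.expectation ?P (\<lambda>c. h (c u)) = measure_pmf.expectation (map_pmf (\<lambda>c. c u) ?P) h"
      by simp
    also have "map_pmf (\<lambda>c. c u) ?P = K u" using that SV finV by (subst Pi_pmf_component) auto
    finally show ?thesis .
  qed
  have "(\<Sum>u\<in>S. ((1::real) - (-1))^2) = 4 * real (card S)" by simp
  moreover have "card S > 0" using finS ne by (simp add: card_gt_0_iff)
  ultimately have "measure_pmf.prob ?P {x \<in> space (measure_pmf ?P). (\<Sum>u\<in>S. h (x u)) \<le> (\<Sum>u\<in>S. measure_pmf.expectation ?P (\<lambda>c. h (c u))) - \<epsilon>}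
      \<le> exp (-2 * \<epsilon>\<^sup>2 / (4 * real (card S)))"
    using H.Hoeffding_ineq_le[OF eps] by simp
  moreover have "-2 * \<epsilon>\<^sup>2 / (4 * real (card S)) = - (\<epsilon>^2) / (2 * real (card S))" by simp
  moreover have "(\<Sum>u\<in>S. measure_pmf.expectation ?P (\<lambda>c. h (c u))) = (\<Sum>u\<in>S. measure_pmf.expectation (K u) h)"
    using eqE by simp
  ultimately show ?thesis by simp
qed

definition sg :: "bool \<Rightarrow> real" where "sg b = (if b then 1 else -1)"

lemma node_exp:
  fixes N :: "nat set" and c :: "nat \<Rightarrow> bool" and \<tau> :: real
  assumes fin: "finite N" and ne: "N \<noteq> {}" and tau: "\<tau> = 1 \<or> \<tau> = -1"
  defines "\<rho> \<equiv> (\<Sum>v\<in>N. \<tau> * sg (c v)) / real (card N)"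
  shows "measure_pmf.expectation
           (do { x \<leftarrow> pmf_of_set N; y \<leftarrow> pmf_of_set N; return_pmf (if c x = c y then c x else cu) })
           (\<lambda>b. \<tau> * sg b)
         = \<rho> + \<tau> * sg cu * (1 - \<rho>^2) / 2"
proof -
  let ?h = "\<lambda>b. \<tau> * sg b"
  define k where "k = real (card N)"
  have kp: "k > 0" using fin ne by (simp add: k_def card_gt_0_iff)
  define a where "a = (\<lambda>v. \<tau> * sg (c v))"
  define s where "s = \<tau> * sg cu"
  define A where "A = (\<Sum>v\<in>N. a v)"
  have pw: "?h (if c x = c y then c x else cu) = (a x + a y) / 2 + s * (1 - a x * a y) / 2" for x y
    using tau by (cases "c x"; cases "c y"; cases cu) (auto simp: a_def s_def sg_def)
  have "measure_pmf.expectation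
           (do { x \<leftarrow> pmf_of_set N; y \<leftarrow> pmf_of_set N; return_pmf (if c x = c y then c x else cu) }) ?h
       = (\<Sum>x\<in>N. (\<Sum>y\<in>N. ?h (if c x = c y then c x else cu) / k) / k)"
  proof -
    have inner: "measure_pmf.expectation (pmf_of_set N \<bind> (\<lambda>y. return_pmf (if c x = c y then c x else cu))) ?h
        = (\<Sum>y\<in>N. ?h (if c x = c y then c x else cu) /\<^sub>R k)" for x
      using fin ne by (subst pmf_expectation_bind_pmf_of_set) (auto simp: k_def simp del: scaleR_conv_of_real)
    have "measure_pmf.expectation
           (do { x \<leftarrow> pmf_of_set N; y \<leftarrow> pmf_of_set N; return_pmf (if c x = c y then c x else cu) }) ?h
      = (\<Sum>a\<in>N. measure_pmf.expectation (pmf_of_set N \<bind> (\<lambda>y. return_pmf (if c a = c y then c a else cu))) ?h /\<^sub>R real (card N))"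
      by (rule pmf_expectation_bind_pmf_of_set) (use fin ne in auto)
    also have "\<dots> = (\<Sum>a\<in>N. (\<Sum>y\<in>N. ?h (if c a = c y then c a else cu) /\<^sub>R k) /\<^sub>R k)"
      by (simp only: inner k_def)
    also have "\<dots> = (\<Sum>x\<in>N. (\<Sum>y\<in>N. ?h (if c x = c y then c x else cu) / k) / k)"
      by (simp add: divide_inverse mult.commute)
    finally show ?thesis .
  qed
  also have "\<dots> = (\<Sum>x\<in>N. \<Sum>y\<in>N. ((a x + a y) / 2 + s * (1 - a x * a y) / 2)) / k^2"
    by (simp add: pw sum_divide_distrib power2_eq_square)
  also have "(\<Sum>x\<in>N. \<Sum>y\<in>N. ((a x + a y) / 2 + s * (1 - a x * a y) / 2))
      = (\<Sum>x\<in>N. (k / 2) * a x + (A / 2 + s * k / 2) - (s * A / 2) * a x)"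
  proof (intro sum.cong refl)
    fix x assume "x \<in> N"
    have "(\<Sum>y\<in>N. ((a x + a y) / 2 + s * (1 - a x * a y) / 2))
        = (\<Sum>y\<in>N. (a x / 2 + s / 2) + (1/2 - s * a x / 2) * a y)"
      by (intro sum.cong refl) (simp add: field_simps)
    also have "\<dots> = k * (a x / 2 + s / 2) + (1/2 - s * a x / 2) * A"
      by (simp add: sum.distrib sum_distrib_left[symmetric] A_def k_def)
    finally show "(\<Sum>y\<in>N. ((a x + a y) / 2 + s * (1 - a x * a y) / 2)) = (k / 2) * a x + (A / 2 + s * k / 2) - (s * A / 2) * a x"
      by (simp add: algebra_simps)
  qed
  also have "\<dots> = (k / 2) * A + k * (A / 2 + s * k / 2) - (s * A / 2) * A"
    by (simp only: sum.distrib sum_subtractf sum_distrib_left[symmetric] sum_constant A_def k_def distrib_left)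
  also have "\<dots> = k * A / 2 + k * A / 2 + s * k * k / 2 - s * A * A / 2" by (simp add: field_simps)
  finally have "measure_pmf.expectation
           (do { x \<leftarrow> pmf_of_set N; y \<leftarrow> pmf_of_set N; return_pmf (if c x = c y then c x else cu) }) ?h
      = (k * A / 2 + k * A / 2 + s * k * k / 2 - s * A * A / 2) / k^2" .
  also have "\<dots> = A / k + s * (1 - (A / k)^2) / 2"
    using kp by (simp add: field_simps power2_eq_square)
  finally show ?thesis by (simp add: \<rho>_def A_def a_def k_def s_def)
qed

lemma sq_sum_le: "(x + y)^2 \<le> 2 * x^2 + 2 * (y::real)^2"
proof -
  have "0 \<le> (x - y)^2" by simp
  then show ?thesis by (simp add: power2_eq_square algebra_simps)
qed

locale clus =
  fixes E :: "nat \<Rightarrow> nat \<Rightarrow> bool" and V S T :: "nat set" and n d b D :: nat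
  assumes finS: "finite S" and finT: "finite T" and disj: "S \<inter> T = {}" and VST: "V = S \<union> T"
    and cS: "card S = n" and cT: "card T = n" and symE: "\<And>u v. E u v = E v u"
    and degS: "\<And>u. u \<in> S \<Longrightarrow> card (nbrs E S u) = D"
    and crossS: "\<And>u. u \<in> S \<Longrightarrow> card (nbrs E T u) = b"
    and crossT: "\<And>u. u \<in> T \<Longrightarrow> card (nbrs E S u) = b"
    and dDb: "d = D + b"
    and Dpos: "D > 0" and npos: "n > 0"
begin

sublocale regS E S D using finS symE degS Dpos by unfold_locales auto

lemma finV: "finite V" using finS finT VST by simp

lemma nbrs_split: "nbrs E V u = nbrs E S u \<union> nbrs E T u" "nbrs E S u \<inter> nbrs E T u = {}"
  using VST disj by (auto simp: nbrs_def)

lemma fin_nbrs: "finite (nbrs E X u)" if "X = S \<or> X = T \<or> X = V" for X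
  using that finS finT finV by (auto simp: nbrs_def)

lemma degV: "u \<in> S \<Longrightarrow> card (nbrs E V u) = d"
  using nbrs_split[of u] degS crossS dDb fin_nbrs by (simp add: card_Un_disjoint)

lemma dpos: "d > 0" using dDb Dpos by simp

definition rho :: "(nat \<Rightarrow> real) \<Rightarrow> nat \<Rightarrow> real" where
  "rho f u = (\<Sum>v\<in>nbrs E V u. f v) / real d"

lemma sum_rho:
  "(\<Sum>u\<in>S. rho f u) = (real D * (\<Sum>v\<in>S. f v) + real b * (\<Sum>v\<in>T. f v)) / real d"
proof -
  have "(\<Sum>u\<in>S. \<Sum>v\<in>nbrs E V u. f v) = (\<Sum>u\<in>S. \<Sum>v\<in>V. if E u v then f v else 0)"
    unfolding nbrs_def by (intro sum.cong refl sum.inter_filter[OF finV])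
  also have "\<dots> = (\<Sum>v\<in>V. \<Sum>u\<in>S. if E u v then f v else 0)" by (rule sum.swap)
  also have "\<dots> = (\<Sum>v\<in>V. f v * real (card (nbrs E S v)))"
  proof (intro sum.cong refl)
    fix v assume "v \<in> V"
    have "(\<Sum>u\<in>S. if E u v then f v else 0) = (\<Sum>u\<in>{u\<in>S. E u v}. f v)"
      by (rule sum.inter_filter[OF finS, symmetric])
    also have "{u\<in>S. E u v} = nbrs E S v" using symE by (auto simp: nbrs_def)
    finally have "(\<Sum>u\<in>S. if E u v then f v else 0) = (\<Sum>u\<in>nbrs E S v. f v)" .
    then show "(\<Sum>u\<in>S. if E u v then f v else 0) = f v * real (card (nbrs E S v))" by simp
  qed
  also have "\<dots> = (\<Sum>v\<in>S. f v * real (card (nbrs E S v))) + (\<Sum>v\<in>T. f v * real (card (nbrs E S v)))"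
    using VST disj finS finT by (simp add: sum.union_disjoint)
  also have "\<dots> = real D * (\<Sum>v\<in>S. f v) + real b * (\<Sum>v\<in>T. f v)"
  proof -
    have "(\<Sum>v\<in>S. f v * real (card (nbrs E S v))) = (\<Sum>v\<in>S. real D * f v)"
      by (intro sum.cong refl) (simp add: degS)
    moreover have "(\<Sum>v\<in>T. f v * real (card (nbrs E S v))) = (\<Sum>v\<in>T. real b * f v)"
      by (intro sum.cong refl) (simp add: crossT)
    ultimately show ?thesis by (simp add: sum_distrib_left)
  qed
  finally show ?thesis unfolding rho_def by (simp add: sum_divide_distrib[symmetric])
qed

lemma rho_split:
  assumes u: "u \<in> S" and fb: "\<And>v. \<bar>f v\<bar> \<le> 1"
  shows "\<exists>e. rho f u = real D / real d * Pop f u + e \<and> \<bar>e\<bar> \<le> real b / real d"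
proof -
  define e where "e = (\<Sum>v\<in>nbrs E T u. f v) / real d"
  have "(\<Sum>v\<in>nbrs E V u. f v) = (\<Sum>v\<in>nbrs E S u. f v) + (\<Sum>v\<in>nbrs E T u. f v)"
    using nbrs_split[of u] fin_nbrs by (simp add: sum.union_disjoint)
  then have "rho f u = real D / real d * Pop f u + e"
    unfolding rho_def Pop_def e_def using Dpos by (simp add: add_divide_distrib)
  moreover have "\<bar>\<Sum>v\<in>nbrs E T u. f v\<bar> \<le> real b"
  proof -
    have "\<bar>\<Sum>v\<in>nbrs E T u. f v\<bar> \<le> (\<Sum>v\<in>nbrs E T u. \<bar>f v\<bar>)" by (rule sum_abs)
    also have "\<dots> \<le> (\<Sum>v\<in>nbrs E T u. 1)" by (intro sum_mono fb)
    also have "\<dots> = real b" using crossS[OF u] by simp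
    finally show ?thesis .
  qed
  then have "\<bar>e\<bar> \<le> real b / real d" using dpos by (simp add: e_def divide_right_mono)
  ultimately show ?thesis by blast
qed

lemma sumsq_rho:
  assumes fb: "\<And>v. \<bar>f v\<bar> \<le> 1"
  shows "(\<Sum>u\<in>S. (rho f u)^2) \<le> 2 * (\<Sum>u\<in>S. (Pop f u)^2) + 2 * real n * (real b / real d)^2"
proof -
  have "(rho f u)^2 \<le> 2 * (Pop f u)^2 + 2 * (real b / real d)^2" if u: "u \<in> S" for u
  proof -
    obtain e where e: "rho f u = real D / real d * Pop f u + e" "\<bar>e\<bar> \<le> real b / real d"
      using rho_split[of u f, OF u fb] by blast
    define q where "q = real D / real d"
    have q: "0 \<le> q" "q \<le> 1" using dDb dpos by (auto simp: q_def)
    have "(rho f u)^2 \<le> 2 * (q * Pop f u)^2 + 2 * e^2"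
      unfolding e(1) q_def[symmetric] by (rule sq_sum_le)
    also have "(q * Pop f u)^2 \<le> (Pop f u)^2"
    proof -
      have "q^2 \<le> 1" using q by (simp add: power_le_one)
      then have "q^2 * (Pop f u)^2 \<le> (Pop f u)^2" by (intro mult_left_le_one_le) auto
      then show ?thesis by (simp add: power_mult_distrib)
    qed
    also have "e^2 \<le> (real b / real d)^2" using e(2) by (metis abs_ge_zero power2_abs power_mono)
    finally show ?thesis by simp
  qed
  then have "(\<Sum>u\<in>S. (rho f u)^2) \<le> (\<Sum>u\<in>S. 2 * (Pop f u)^2 + 2 * (real b / real d)^2)"
    by (intro sum_mono) auto
  also have "\<dots> = 2 * (\<Sum>u\<in>S. (Pop f u)^2) + 2 * real n * (real b / real d)^2"
    by (simp add: sum.distrib sum_distrib_left cS)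
  finally show ?thesis .
qed


definition Kst :: "(nat \<Rightarrow> bool) \<Rightarrow> nat \<Rightarrow> bool pmf" where
  "Kst c u = do { x \<leftarrow> pmf_of_set (nbrs E V u); y \<leftarrow> pmf_of_set (nbrs E V u);
          return_pmf (if c x = c y then c x else c u) }"

lemma exp_lower:
  fixes c :: "nat \<Rightarrow> bool" and \<tau> Lam :: real
  assumes tau: "\<tau> = 1 \<or> \<tau> = -1" and conn: "connected_on E S"
    and Lam: "max \<bar>eigs_desc (walk_matrix E S) ! 1\<bar> \<bar>last (eigs_desc (walk_matrix E S))\<bar> \<le> Lam"
  defines "s \<equiv> (\<Sum>u\<in>S. \<tau> * sg (c u))"
  shows "(\<Sum>u\<in>S. measure_pmf.expectation (Kst c u) (\<lambda>x. \<tau> * sg x))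
     \<ge> 3/2 * s - s^2 / real n - 2 * real n * (real b / real d) - Lam^2 * real n - real n * (real b / real d)^2"
proof -
  define f where "f = (\<lambda>v. \<tau> * sg (c v))"
  define \<beta> where "\<beta> = real b / real d"
  have fb: "\<bar>f v\<bar> \<le> 1" for v using tau by (auto simp: f_def sg_def)
  have f2: "(f v)^2 = 1" for v using tau by (auto simp: f_def sg_def)
  have L0: "Lam \<ge> 0" using Lam by (meson abs_ge_zero max.coboundedI1 order.trans)
  have eachE: "measure_pmf.expectation (Kst c u) (\<lambda>x. \<tau> * sg x) \<ge> rho f u + f u / 2 - (rho f u)^2 / 2"
    if u: "u \<in> S" for u
  proof -
    have cardN: "card (nbrs E V u) = d" using degV[OF u] .
    have neN: "nbrs E V u \<noteq> {}" using cardN dpos by auto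
    have "measure_pmf.expectation (Kst c u) (\<lambda>x. \<tau> * sg x) = rho f u + f u * (1 - (rho f u)^2) / 2"
      unfolding Kst_def using node_exp[OF fin_nbrs[of V] neN tau, of c "c u"] cardN
      by (simp add: rho_def f_def)
    moreover have "f u * (1 - (rho f u)^2) / 2 \<ge> f u / 2 - (rho f u)^2 / 2"
    proof -
      have "f u * (rho f u)^2 \<le> 1 * (rho f u)^2" using fb[of u] by (intro mult_right_mono) auto
      then show ?thesis by (simp add: algebra_simps)
    qed
    ultimately show ?thesis by simp
  qed
  have "(\<Sum>u\<in>S. measure_pmf.expectation (Kst c u) (\<lambda>x. \<tau> * sg x))
      \<ge> (\<Sum>u\<in>S. rho f u + f u / 2 - (rho f u)^2 / 2)"
    by (intro sum_mono eachE)
  moreover have "(\<Sum>u\<in>S. rho f u + f u / 2 - (rho f u)^2 / 2)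
      = (\<Sum>u\<in>S. rho f u) + s / 2 - (\<Sum>u\<in>S. (rho f u)^2) / 2"
    by (simp add: sum.distrib sum_subtractf sum_divide_distrib s_def f_def)
  moreover have "(\<Sum>u\<in>S. rho f u) \<ge> s - 2 * real n * \<beta>"
  proof -
    define t where "t = (\<Sum>v\<in>T. f v)"
    have sS: "(\<Sum>v\<in>S. f v) = s" by (simp add: s_def f_def)
    have "\<bar>s\<bar> \<le> real n"
    proof -
      have "\<bar>s\<bar> \<le> (\<Sum>v\<in>S. \<bar>f v\<bar>)" unfolding sS[symmetric] by (rule sum_abs)
      also have "\<dots> \<le> (\<Sum>v\<in>S. 1)" by (intro sum_mono fb)
      finally show ?thesis using cS by simp
    qed
    moreover have "\<bar>t\<bar> \<le> real n"
    proof -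
      have "\<bar>t\<bar> \<le> (\<Sum>v\<in>T. \<bar>f v\<bar>)" unfolding t_def by (rule sum_abs)
      also have "\<dots> \<le> (\<Sum>v\<in>T. 1)" by (intro sum_mono fb)
      finally show ?thesis using cT by simp
    qed
    ultimately have st: "\<bar>s - t\<bar> \<le> 2 * real n" by simp
    have b0: "\<beta> \<ge> 0" by (simp add: \<beta>_def)
    have "(\<Sum>u\<in>S. rho f u) = (real D * s + real b * t) / real d"
      using sum_rho[of f] sS t_def by simp
    also have "\<dots> = s - \<beta> * (s - t)"
    proof -
      have ne0: "real D + real b \<noteq> 0" using Dpos by simp
      have "real d = real D + real b" using dDb by simp
      then show ?thesis unfolding \<beta>_def using ne0 by (simp add: field_simps)
    qed
    also have "\<dots> \<ge> s - \<beta> * (2 * real n)"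
    proof -
      have "\<beta> * (s - t) \<le> \<beta> * \<bar>s - t\<bar>" using b0 by (simp add: mult_left_mono)
      also have "\<dots> \<le> \<beta> * (2 * real n)" using st b0 by (simp add: mult_left_mono)
      finally show ?thesis by simp
    qed
    finally show ?thesis by (simp add: mult.commute mult.left_commute)
  qed
  moreover have "(\<Sum>u\<in>S. (rho f u)^2) \<le> 2 * (s^2 / real n + Lam^2 * real n) + 2 * real n * \<beta>^2"
  proof -
    have ne: "S \<noteq> {}" using cS npos by auto
    have eig: "\<bar>\<mu>\<bar> \<le> Lam" if "\<forall>u\<in>S. Pop z u = \<mu> * z u" "(\<Sum>u\<in>S. z u) = 0" "\<exists>u\<in>S. z u \<noteq> 0" for z \<mu>
      using eig_bound[OF conn that] Lam by linarith
    have "(\<Sum>u\<in>S. (Pop f u)^2) \<le> (\<Sum>u\<in>S. f u)^2 / real (card S) + Lam^2 * (\<Sum>u\<in>S. (f u)^2)"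
      by (rule spec_bound[OF ne eig L0])
    also have "\<dots> = s^2 / real n + Lam^2 * real n"
    proof -
      have "(\<Sum>u\<in>S. (f u)^2) = real n" using cS by (simp add: f2)
      moreover have "(\<Sum>u\<in>S. f u) = s" by (simp add: s_def f_def)
      ultimately show ?thesis using cS by simp
    qed
    finally have "(\<Sum>u\<in>S. (Pop f u)^2) \<le> s^2 / real n + Lam^2 * real n" .
    then show ?thesis using sumsq_rho[of f, OF fb] by (simp add: \<beta>_def)
  qed
  ultimately show ?thesis by (simp add: \<beta>_def field_simps)
qed


lemma step_is_Pi: "two_choices_step E V c = Pi_pmf V False (Kst c)"
  unfolding two_choices_step_def Kst_def by simp

lemma step_prob:
  fixes c :: "nat \<Rightarrow> bool" and \<tau> Lam \<epsilon> LB :: real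
  assumes tau: "\<tau> = 1 \<or> \<tau> = -1" and conn: "connected_on E S"
    and Lam: "max \<bar>eigs_desc (walk_matrix E S) ! 1\<bar> \<bar>last (eigs_desc (walk_matrix E S))\<bar> \<le> Lam"
    and eps: "\<epsilon> \<ge> 0"
    and LB: "LB \<le> 3/2 * (\<Sum>u\<in>S. \<tau> * sg (c u)) - (\<Sum>u\<in>S. \<tau> * sg (c u))^2 / real n
        - 2 * real n * (real b / real d) - Lam^2 * real n - real n * (real b / real d)^2"
  shows "measure_pmf.prob (two_choices_step E V c) {c'. (\<Sum>u\<in>S. \<tau> * sg (c' u)) \<le> LB - \<epsilon>}
         \<le> exp (- (\<epsilon>^2) / (2 * real n))"
proof -
  have SV: "S \<subseteq> V" using VST by auto
  have ne: "S \<noteq> {}" using cS npos by auto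
  have hb: "\<tau> * sg x \<in> {-1..1}" for x using tau by (auto simp: sg_def)
  have "measure_pmf.prob (Pi_pmf V False (Kst c))
      {c'. (\<Sum>u\<in>S. \<tau> * sg (c' u)) \<le> (\<Sum>u\<in>S. measure_pmf.expectation (Kst c u) (\<lambda>x. \<tau> * sg x)) - \<epsilon>}
      \<le> exp (- (\<epsilon>^2) / (2 * real (card S)))"
    by (rule hoeff_Pi[OF finV SV ne hb eps])
  moreover have "{c'. (\<Sum>u\<in>S. \<tau> * sg (c' u)) \<le> LB - \<epsilon>} \<subseteq>
      {c'. (\<Sum>u\<in>S. \<tau> * sg (c' u)) \<le> (\<Sum>u\<in>S. measure_pmf.expectation (Kst c u) (\<lambda>x. \<tau> * sg x)) - \<epsilon>}"
    using exp_lower[OF tau conn Lam, of c] LB by auto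
  ultimately show ?thesis unfolding step_is_Pi using cS
    by (smt (verit, best) measure_pmf.finite_measure_mono sets_measure_pmf UNIV_I)
qed

end

lemma prob_bind_pmf:
  "measure_pmf.prob (bind_pmf M N) X = measure_pmf.expectation M (\<lambda>x. measure_pmf.prob (N x) X)"
proof -
  have int: "integrable (measure_pmf M) (\<lambda>x. measure_pmf.prob (N x) X)"
    by (rule measure_pmf.integrable_const_bound[of _ 1]) auto
  have "ennreal (measure_pmf.prob (bind_pmf M N) X) = emeasure (measure_pmf (bind_pmf M N)) X"
    by (simp add: measure_pmf.emeasure_eq_measure)
  also have "\<dots> = (\<integral>\<^sup>+x. emeasure (measure_pmf (N x)) X \<partial>measure_pmf M)" by simp
  also have "\<dots> = (\<integral>\<^sup>+x. ennreal (measure_pmf.prob (N x) X) \<partial>measure_pmf M)"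
    by (simp add: measure_pmf.emeasure_eq_measure)
  also have "\<dots> = ennreal (measure_pmf.expectation M (\<lambda>x. measure_pmf.prob (N x) X))"
    by (rule nn_integral_eq_integral[OF int]) auto
  finally show ?thesis
    by (subst (asm) ennreal_inj) (auto intro: integral_nonneg_AE)
qed

fun trajG :: "('c \<Rightarrow> 'c pmf) \<Rightarrow> 'c pmf \<Rightarrow> nat \<Rightarrow> 'c list pmf" where
  "trajG st \<mu> 0 = map_pmf (\<lambda>c. [c]) \<mu>"
| "trajG st \<mu> (Suc t) = trajG st \<mu> t \<bind> (\<lambda>cs. map_pmf (\<lambda>c'. cs @ [c']) (st (last cs)))"

lemma trajectory_trajG: "trajectory E V t = trajG (two_choices_step E V) (init_config V) t"
  by (induction t) auto

lemma trajG_nonempty: "cs \<in> set_pmf (trajG st \<mu> t) \<Longrightarrow> cs \<noteq> []"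
  by (induction t arbitrary: cs) auto

lemma trajG_front: "trajG st \<mu> (Suc t) = \<mu> \<bind> (\<lambda>c. map_pmf ((#) c) (trajG st (st c) t))"
proof (induction t arbitrary: \<mu>)
  case 0
  show ?case by (simp add: bind_map_pmf map_pmf_comp)
next
  case (Suc t)
  have "trajG st \<mu> (Suc (Suc t)) =
      (\<mu> \<bind> (\<lambda>c. map_pmf ((#) c) (trajG st (st c) t))) \<bind> (\<lambda>cs. map_pmf (\<lambda>c'. cs @ [c']) (st (last cs)))"
    by (simp only: trajG.simps(2)[of st \<mu> "Suc t"] Suc.IH)
  also have "\<dots> = \<mu> \<bind> (\<lambda>c. trajG st (st c) t \<bind> (\<lambda>cs. map_pmf (\<lambda>c'. (c # cs) @ [c']) (st (last (c # cs)))))"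
    by (simp add: bind_assoc_pmf bind_map_pmf)
  also have "\<dots> = \<mu> \<bind> (\<lambda>c. trajG st (st c) t \<bind> (\<lambda>cs. map_pmf ((#) c) (map_pmf (\<lambda>c'. cs @ [c']) (st (last cs)))))"
  proof (intro bind_pmf_cong refl)
    fix c cs assume "cs \<in> set_pmf (trajG st (st c) t)"
    then have "cs \<noteq> []" by (rule trajG_nonempty)
    then show "map_pmf (\<lambda>c'. (c # cs) @ [c']) (st (last (c # cs))) = map_pmf ((#) c) (map_pmf (\<lambda>c'. cs @ [c']) (st (last cs)))"
      by (simp add: map_pmf_comp)
  qed
  also have "\<dots> = \<mu> \<bind> (\<lambda>c. map_pmf ((#) c) (trajG st (st c) (Suc t)))"
    by (simp add: map_bind_pmf)
  finally show ?case .
qed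

definition Ev :: "('c \<Rightarrow> bool) \<Rightarrow> 'c list set" where
  "Ev G = {cs. \<exists>i < length cs. G (cs ! i)}"

lemma Ev_Cons: "c # cs \<in> Ev G \<longleftrightarrow> G c \<or> cs \<in> Ev G"
  unfolding Ev_def by (auto simp: nth_Cons' split: if_splits)

lemma Ev_snoc: "cs \<in> Ev G \<Longrightarrow> cs @ [c] \<in> Ev G"
  unfolding Ev_def by (auto simp: nth_append)

lemma prob_trajG_front:
  "measure_pmf.prob (trajG st \<mu> (Suc t)) (Ev G) =
   measure_pmf.expectation \<mu> (\<lambda>c. if G c then 1 else measure_pmf.prob (trajG st (st c) t) (Ev G))"
proof -
  have "measure_pmf.prob (trajG st \<mu> (Suc t)) (Ev G) =
        measure_pmf.expectation \<mu> (\<lambda>c. measure_pmf.prob (map_pmf ((#) c) (trajG st (st c) t)) (Ev G))"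
    by (simp only: trajG_front prob_bind_pmf)
  also have "\<dots> = measure_pmf.expectation \<mu> (\<lambda>c. if G c then 1 else measure_pmf.prob (trajG st (st c) t) (Ev G))"
  proof (intro Bochner_Integration.integral_cong refl)
    fix c
    have "(#) c -` Ev G = (if G c then UNIV else Ev G)" using Ev_Cons[of c _ G] by auto
    then show "measure_pmf.prob (map_pmf ((#) c) (trajG st (st c) t)) (Ev G) =
       (if G c then 1 else measure_pmf.prob (trajG st (st c) t) (Ev G))"
      by (simp add: measure_map_pmf)
  qed
  finally show ?thesis .
qed

lemma prob_trajG_mono:
  "measure_pmf.prob (trajG st \<mu> t) (Ev G) \<le> measure_pmf.prob (trajG st \<mu> (Suc t)) (Ev G)"
proof -
  have "measure_pmf.prob (trajG st \<mu> (Suc t)) (Ev G) =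
     measure_pmf.expectation (trajG st \<mu> t) (\<lambda>cs. measure_pmf.prob (map_pmf (\<lambda>c'. cs @ [c']) (st (last cs))) (Ev G))"
    by (simp add: prob_bind_pmf)
  also have "\<dots> \<ge> measure_pmf.expectation (trajG st \<mu> t) (indicator (Ev G))"
  proof (rule integral_mono)
    show "integrable (measure_pmf (trajG st \<mu> t)) (indicator (Ev G) :: _ \<Rightarrow> real)"
      by (rule measure_pmf.integrable_const_bound[of _ 1]) auto
    show "integrable (measure_pmf (trajG st \<mu> t))
        (\<lambda>cs. measure_pmf.prob (map_pmf (\<lambda>c'. cs @ [c']) (st (last cs))) (Ev G))"
      by (rule measure_pmf.integrable_const_bound[of _ 1]) auto
    fix cs
    show "indicator (Ev G) cs \<le> measure_pmf.prob (map_pmf (\<lambda>c'. cs @ [c']) (st (last cs))) (Ev G)"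
    proof (cases "cs \<in> Ev G")
      case True
      then have "(\<lambda>c'. cs @ [c']) -` Ev G = UNIV" using Ev_snoc by auto
      then show ?thesis using True by (simp add: measure_map_pmf)
    next
      case False then show ?thesis by simp
    qed
  qed
  finally show ?thesis by simp
qed

lemma prob_trajG_mono': "t \<le> t' \<Longrightarrow>
  measure_pmf.prob (trajG st \<mu> t) (Ev G) \<le> measure_pmf.prob (trajG st \<mu> t') (Ev G)"
proof (induction t' rule: dec_induct)
  case base then show ?case by simp
next
  case (step m) then show ?case using prob_trajG_mono[of st \<mu> m G] by linarith
qed

lemma prob_trajG_0: "measure_pmf.prob (trajG st \<mu> 0) (Ev G) = measure_pmf.prob \<mu> {c. G c}"
proof -
  have "(\<lambda>c. [c]) -` Ev G = {c. G c}" by (auto simp: Ev_def)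
  then show ?thesis by (simp add: measure_map_pmf)
qed

lemma bias_card: "finite S \<Longrightarrow> real_of_int (bias S c) = 2 * real (card {u\<in>S. c u}) - real (card S)"
proof -
  assume fin: "finite S"
  have "card {u\<in>S. c u} + card {u\<in>S. \<not> c u} = card S"
    using fin by (subst card_Un_disjoint[symmetric]) (auto intro: arg_cong[where f=card])
  then show ?thesis unfolding bias_def by linarith
qed

lemma bias_card': "finite S \<Longrightarrow> - real_of_int (bias S c) = 2 * real (card {u\<in>S. \<not> c u}) - real (card S)"
proof -
  assume fin: "finite S"
  have "card {u\<in>S. c u} + card {u\<in>S. \<not> c u} = card S"
    using fin by (subst card_Un_disjoint[symmetric]) (auto intro: arg_cong[where f=card])
  then show ?thesis unfolding bias_def by linarith
qed

lemma bias_sum: "finite S \<Longrightarrow> real_of_int (bias S c) = (\<Sum>u\<in>S. sg (c u))"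
proof -
  assume fin: "finite S"
  have "(\<Sum>u\<in>S. sg (c u)) = (\<Sum>u\<in>{u\<in>S. c u}. sg (c u)) + (\<Sum>u\<in>{u\<in>S. \<not> c u}. sg (c u))"
    using fin by (subst sum.union_disjoint[symmetric]) (auto intro: sum.cong)
  also have "\<dots> = real (card {u\<in>S. c u}) - real (card {u\<in>S. \<not> c u})"
    by (simp add: sg_def)
  finally show ?thesis unfolding bias_def by simp
qed

lemma prob_pair_times:
  fixes M :: "'a pmf" and N :: "'b pmf"
  shows "measure_pmf.prob (pair_pmf M N) (A \<times> B) = measure_pmf.prob M A * measure_pmf.prob N B"
proof -
  have "measure_pmf.prob (pair_pmf M N) (A \<times> B) =
      measure_pmf.expectation M (\<lambda>x. measure_pmf.prob (N \<bind> (\<lambda>y. return_pmf (x, y))) (A \<times> B))"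
    unfolding pair_pmf_def by (rule prob_bind_pmf)
  also have "\<dots> = measure_pmf.expectation M (\<lambda>x. indicator A x * measure_pmf.prob N B)"
  proof (intro Bochner_Integration.integral_cong refl)
    fix x :: 'a
    have "N \<bind> (\<lambda>y. return_pmf (x, y)) = map_pmf (Pair x) N" by (simp add: map_pmf_def)
    moreover have "Pair x -` (A \<times> B) = (if x \<in> A then B else {})" by auto
    ultimately show "measure_pmf.prob (N \<bind> (\<lambda>y. return_pmf (x, y))) (A \<times> B) = indicator A x * measure_pmf.prob N B"
      by (simp add: measure_map_pmf)
  qed
  also have "\<dots> = measure_pmf.prob M A * measure_pmf.prob N B" by simp
  finally show ?thesis .
qed

lemma coin_bern: "pmf_of_set {True, False} = bernoulli_pmf (1/2)"
  by (simp add: bernoulli_pmf_half_conv_pmf_of_set UNIV_bool insert_commute)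

lemma map_not_coin: "map_pmf Not (pmf_of_set {True, False}) = pmf_of_set {True, False}"
  by (subst map_pmf_of_set_inj) (auto simp: inj_on_def insert_commute)

lemma init_two:
  fixes t :: real
  assumes f1: "finite V1" and f2: "finite V2" and disj: "V1 \<inter> V2 = {}" and c1: "card V1 = n" and c2: "card V2 = n"
  shows "measure_pmf.prob (init_config (V1 \<union> V2)) {c. real (card {u\<in>V1. c u}) \<ge> t \<and> real (card {u\<in>V2. \<not> c u}) \<ge> t}
       = (measure_pmf.prob (binomial_pmf n (1/2)) {k. real k \<ge> t})^2"
proof -
  let ?B = "\<lambda>_::nat. pmf_of_set {True, False}"
  let ?h = "\<lambda>(f::nat\<Rightarrow>bool,g) x. if x \<in> V1 then f x else g x"
  define A where "A = {f::nat\<Rightarrow>bool. real (card {u\<in>V1. f u}) \<ge> t}"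
  define B where "B = {g::nat\<Rightarrow>bool. real (card {u\<in>V2. \<not> g u}) \<ge> t}"
  have "init_config (V1 \<union> V2) = map_pmf ?h (pair_pmf (Pi_pmf V1 False ?B) (Pi_pmf V2 False ?B))"
    unfolding init_config_def by (rule Pi_pmf_union[OF f1 f2 disj])
  moreover have "?h -` {c. real (card {u\<in>V1. c u}) \<ge> t \<and> real (card {u\<in>V2. \<not> c u}) \<ge> t} = A \<times> B"
  proof -
    have e1: "{u\<in>V1. (if u \<in> V1 then f u else g u)} = {u\<in>V1. f u}" for f g :: "nat \<Rightarrow> bool" by auto
    have e2: "{u\<in>V2. \<not> (if u \<in> V1 then f u else g u)} = {u\<in>V2. \<not> g u}" for f g :: "nat \<Rightarrow> bool" using disj by auto
    have "p \<in> ?h -` {c. real (card {u\<in>V1. c u}) \<ge> t \<and> real (card {u\<in>V2. \<not> c u}) \<ge> t} \<longleftrightarrow> p \<in> A \<times> B"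
      for p :: "(nat \<Rightarrow> bool) \<times> (nat \<Rightarrow> bool)"
    proof -
      obtain f g where p: "p = (f, g)" by (cases p)
      show ?thesis
        unfolding p A_def B_def by (simp only: vimage_def mem_Collect_eq mem_Times_iff prod.case fst_conv snd_conv e1 e2)
    qed
    then show ?thesis by blast
  qed
  ultimately have "measure_pmf.prob (init_config (V1 \<union> V2)) {c. real (card {u\<in>V1. c u}) \<ge> t \<and> real (card {u\<in>V2. \<not> c u}) \<ge> t}
      = measure_pmf.prob (Pi_pmf V1 False ?B) A * measure_pmf.prob (Pi_pmf V2 False ?B) B"
    by (simp add: measure_map_pmf prob_pair_times)
  moreover have "measure_pmf.prob (Pi_pmf V1 False ?B) A = measure_pmf.prob (binomial_pmf n (1/2)) {k. real k \<ge> t}"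
  proof -
    have "binomial_pmf n (1/2) = map_pmf (\<lambda>f. card {x\<in>V1. f x}) (Pi_pmf V1 False (\<lambda>_. bernoulli_pmf (1/2)))"
      by (rule binomial_pmf_altdef'[OF f1 c1]) auto
    then show ?thesis unfolding A_def coin_bern by (simp add: measure_map_pmf vimage_def)
  qed
  moreover have "measure_pmf.prob (Pi_pmf V2 False ?B) B = measure_pmf.prob (binomial_pmf n (1/2)) {k. real k \<ge> t}"
  proof -
    have "Pi_pmf V2 True (\<lambda>x. map_pmf Not (?B x)) = map_pmf ((\<circ>) Not) (Pi_pmf V2 False ?B)"
      by (rule Pi_pmf_map[OF f2]) simp
    then have eq: "Pi_pmf V2 True ?B = map_pmf ((\<circ>) Not) (Pi_pmf V2 False ?B)"
      by (simp only: map_not_coin)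
    have "binomial_pmf n (1/2) = map_pmf (\<lambda>f. card {x\<in>V2. f x}) (Pi_pmf V2 True (\<lambda>_. bernoulli_pmf (1/2)))"
      by (rule binomial_pmf_altdef'[OF f2 c2]) auto
    also have "\<dots> = map_pmf (\<lambda>f. card {x\<in>V2. f x}) (map_pmf ((\<circ>) Not) (Pi_pmf V2 False ?B))"
      using eq coin_bern by simp
    also have "\<dots> = map_pmf (\<lambda>g. card {x\<in>V2. \<not> g x}) (Pi_pmf V2 False ?B)"
      by (simp add: map_pmf_comp)
    finally show ?thesis unfolding B_def by (simp add: measure_map_pmf vimage_def)
  qed
  ultimately show ?thesis by (simp add: power2_eq_square)
qed

lemma trajG_bind: "trajG st \<mu> k = \<mu> \<bind> (\<lambda>c. trajG st (return_pmf c) k)"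
proof (induction k)
  case 0 show ?case by (simp add: map_pmf_def bind_return_pmf)
next
  case (Suc k)
  show ?case by (simp only: trajG.simps(2) Suc bind_assoc_pmf)
qed

lemma prob_trajG_bind:
  "measure_pmf.prob (trajG st \<mu> k) X = measure_pmf.expectation \<mu> (\<lambda>c. measure_pmf.prob (trajG st (return_pmf c) k) X)"
  by (subst trajG_bind) (rule prob_bind_pmf)

lemma h_Suc:
  "measure_pmf.prob (trajG st (return_pmf c) (Suc k)) (Ev G) =
   (if G c then 1 else measure_pmf.expectation (st c) (\<lambda>c'. measure_pmf.prob (trajG st (return_pmf c') k) (Ev G)))"
  by (subst prob_trajG_front) (simp add: prob_trajG_bind[of st "st c"])

lemma h_0: "G c \<Longrightarrow> measure_pmf.prob (trajG st (return_pmf c) 0) (Ev G) = 1"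
  by (simp add: Ev_def)

lemma expect_lower:
  fixes f :: "'a \<Rightarrow> real"
  assumes "\<And>x. f x \<ge> 0" "\<And>x. f x \<le> 1" "\<And>x. x \<in> B \<Longrightarrow> f x \<ge> \<gamma>" "\<gamma> \<ge> 0"
  shows "measure_pmf.expectation p f \<ge> \<gamma> * measure_pmf.prob p B"
proof -
  have "measure_pmf.expectation p (\<lambda>x. \<gamma> * indicator B x) \<le> measure_pmf.expectation p f"
  proof (rule integral_mono)
    show "integrable (measure_pmf p) (\<lambda>x. \<gamma> * indicator B x)"
      by (rule measure_pmf.integrable_const_bound[of _ \<gamma>]) (auto simp: assms(4) indicator_def)
    show "integrable (measure_pmf p) f"
      by (rule measure_pmf.integrable_const_bound[of _ 1]) (use assms in auto)
    fix x show "\<gamma> * indicator B x \<le> f x" using assms by (auto simp: indicator_def)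
  qed
  then show ?thesis by simp
qed

lemma chain_induct:
  fixes st :: "'c \<Rightarrow> 'c pmf" and Tg :: "'c \<Rightarrow> bool" and G :: "real \<Rightarrow> 'c \<Rightarrow> bool" and L A0 :: real
  assumes hitG: "\<And>A c. A \<ge> L \<Longrightarrow> G A c \<Longrightarrow> Tg c"
    and stepG: "\<And>A c. A0 \<le> A \<Longrightarrow> A < L \<Longrightarrow> G A c \<Longrightarrow> \<not> Tg c \<Longrightarrow>
        measure_pmf.prob (st c) {c'. \<not> G (6/5 * A) c'} \<le> 400 / A^2"
    and A0: "A0 \<ge> 32"
  shows "A0 \<le> A \<Longrightarrow> L \<le> A * (6/5)^k \<Longrightarrow> G A c \<Longrightarrow>
     measure_pmf.prob (trajG st (return_pmf c) k) (Ev Tg) \<ge> 1 - 1400 / A^2"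
proof (induction k arbitrary: A c)
  case 0
  then have "Tg c" using hitG by simp
  then have "measure_pmf.prob (trajG st (return_pmf c) 0) (Ev Tg) = 1" by (rule h_0)
  then show ?case by simp
next
  case (Suc k)
  show ?case
  proof (cases "Tg c")
    case True
    then have "measure_pmf.prob (trajG st (return_pmf c) (Suc k)) (Ev Tg) = 1" by (subst h_Suc) simp
    then show ?thesis by simp
  next
    case False
    have Apos: "A > 0" using Suc.prems A0 by linarith
    have AL: "A < L"
    proof (rule ccontr)
      assume "\<not> A < L"
      then have "L \<le> A" by simp
      then have "Tg c" using hitG Suc.prems(3) by blast
      then show False using False by simp
    qed
    define \<gamma> where "\<gamma> = 1 - 1400 / (6/5 * A)^2"
    have A2: "A^2 \<ge> 32^2" using Suc.prems A0 by (intro power_mono) auto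
    have g0: "\<gamma> \<ge> 0"
    proof -
      have "1400 / (6/5 * A)^2 = 1400 / (36/25 * A^2)" by (simp add: power2_eq_square)
      also have "\<dots> \<le> 1" using A2 by (simp add: divide_le_eq)
      finally show ?thesis by (simp add: \<gamma>_def)
    qed
    have IH: "measure_pmf.prob (trajG st (return_pmf c') k) (Ev Tg) \<ge> \<gamma>" if "G (6/5 * A) c'" for c'
      unfolding \<gamma>_def
    proof (rule Suc.IH)
      show "A0 \<le> 6/5 * A" using Suc.prems Apos by simp
      show "L \<le> 6/5 * A * (6/5)^k" using Suc.prems by (simp add: algebra_simps)
    qed (rule that)
    have "measure_pmf.prob (trajG st (return_pmf c) (Suc k)) (Ev Tg) =
        measure_pmf.expectation (st c) (\<lambda>c'. measure_pmf.prob (trajG st (return_pmf c') k) (Ev Tg))"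
      using False by (subst h_Suc) simp
    also have "\<dots> \<ge> \<gamma> * measure_pmf.prob (st c) {c'. G (6/5 * A) c'}"
      by (rule expect_lower) (use IH g0 in auto)
    finally have *: "measure_pmf.prob (trajG st (return_pmf c) (Suc k)) (Ev Tg) \<ge> \<gamma> * measure_pmf.prob (st c) {c'. G (6/5 * A) c'}" .
    have "measure_pmf.prob (st c) {c'. G (6/5 * A) c'} = 1 - measure_pmf.prob (st c) {c'. \<not> G (6/5 * A) c'}"
      using measure_pmf.prob_compl[of "{c'. \<not> G (6/5 * A) c'}" "st c"] by (simp add: Compl_eq_Diff_UNIV[symmetric] Collect_neg_eq[symmetric])
    also have "\<dots> \<ge> 1 - 400 / A^2" using stepG[OF _ AL Suc.prems(3) False] Suc.prems(1) by simp
    finally have P: "measure_pmf.prob (st c) {c'. G (6/5 * A) c'} \<ge> 1 - 400 / A^2" .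
    have "\<gamma> * measure_pmf.prob (st c) {c'. G (6/5 * A) c'} \<ge> \<gamma> * (1 - 400 / A^2)"
      using P g0 by (intro mult_left_mono) auto
    moreover have "\<gamma> * (1 - 400 / A^2) \<ge> 1 - 1400 / A^2"
    proof -
      define u where "u = 1 / A^2"
      have u0: "u \<ge> 0" by (simp add: u_def)
      have g: "\<gamma> = 1 - 8750/9 * u" unfolding \<gamma>_def u_def by (simp add: power2_eq_square field_simps)
      have "\<gamma> * (1 - 400 / A^2) = (1 - 8750/9 * u) * (1 - 400 * u)" by (simp add: g u_def)
      also have "\<dots> = (1 - 1400 * u) + (250/9 * u + 3500000/9 * (u*u))" by (simp add: field_simps)
      also have "\<dots> \<ge> 1 - 1400 * u" using u0 mult_nonneg_nonneg[OF u0 u0] by linarith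
      finally show ?thesis by (simp add: u_def)
    qed
    ultimately show ?thesis using * by linarith
  qed
qed

lemma pmfB: "pmf (binomial_pmf n (1/2)) k = real (n choose k) / 2^n"
proof (cases "k \<le> n")
  case True
  then have "(1/2::real)^k * (1/2)^(n-k) = (1/2)^n" by (simp add: power_add[symmetric])
  then show ?thesis by (simp add: pmf_binomial power_one_over)
next
  case False then show ?thesis by (simp add: pmf_binomial binomial_eq_0)
qed

lemma pmfB_rec: "i < n \<Longrightarrow>
  pmf (binomial_pmf n (1/2)) (Suc i) * real (Suc i) = pmf (binomial_pmf n (1/2)) i * (real n - real i)"
proof -
  assume i: "i < n"
  have "Suc i * (n choose Suc i) = (n - i) * (n choose i)"
    using binomial_absorption[of i n] binomial_absorb_comp[of n i] by simp
  then have "real (Suc i) * real (n choose Suc i) = real (n - i) * real (n choose i)"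
    by (metis of_nat_mult)
  then show ?thesis using i by (simp add: pmfB of_nat_diff field_simps)
qed

lemma exp_m2: "2 * exp (-2::real) \<le> 1/2"
proof -
  have "exp (1::real) \<ge> 2" using exp_ge_add_one_self[of 1] by simp
  then have "exp (1::real) * exp 1 \<ge> 2 * 2" by (intro mult_mono) auto
  then have "exp (2::real) \<ge> 4" by (simp add: exp_add[symmetric])
  then show ?thesis by (simp add: exp_minus field_simps)
qed

lemma binom_anti:
  fixes a :: real assumes a0: "a \<ge> 0"
  shows "\<exists>N. \<forall>n\<ge>N. measure_pmf.prob (binomial_pmf n (1/2)) {k. real k \<ge> real n / 2 + a * sqrt (real n)}
           \<ge> exp (-16 * (a+4)^2) / 2"
proof (intro exI allI impI)
  fix n :: nat
  assume nN: "n \<ge> nat \<lceil>(16 * (a+4))^2\<rceil>"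
  define r where "r = sqrt (real n)"
  define m where "m = real n / 2"
  define p where "p = pmf (binomial_pmf n (1/2))"
  define x where "x = 8 * (a+4) / r"
  define J where "J = nat \<lceil>(a+1) * r\<rceil>"
  have "real n \<ge> (16 * (a+4))^2" using nN by linarith
  then have r16: "r \<ge> 16 * (a+4)" unfolding r_def using a0 by (metis real_le_rsqrt)
  have "16 * (a+4) > 0" using a0 by simp
  then have rpos: "r > 0" using r16 by linarith
  have rr: "r * r = real n" unfolding r_def by simp
  have npos: "n > 0" using rr rpos by (metis mult_pos_pos of_nat_0_less_iff)
  have J1: "real J \<ge> (a+1) * r" unfolding J_def by linarith
  have y0: "(a+1) * r \<ge> 0" using a0 rpos by simp
  have J2: "real J \<le> (a+1) * r + 1" unfolding J_def using y0 of_int_ceiling_le_add_one[of "(a+1)*r"] by simp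
  have x0: "x \<ge> 0" using a0 rpos by (simp add: x_def)
  have xh: "x \<le> 1/2"
  proof -
    have "8 * (a+4) \<le> r / 2" using r16 by simp
    then show ?thesis unfolding x_def using rpos by (simp add: divide_le_eq)
  qed
  have ratio: "p (Suc i) \<ge> (1 - x) * p i" if i1: "real i \<ge> m - r" and i2: "real i \<le> m + (a+3) * r" for i
  proof -
    have r4: "r * r \<ge> 4 * r" using r16 a0 rpos by (intro mult_right_mono) auto
    have in_: "i < n"
    proof -
      have "(a+3) * r < r * r / 2" using r16 rpos a0 by (simp add: mult_strict_right_mono) 
      then show ?thesis using i2 rr unfolding m_def by linarith
    qed
    have key: "real n - real i \<ge> (1 - x) * (real i + 1)"
    proof -
      have "real i + 1 \<ge> r * r / 4" using i1 r4 rr unfolding m_def by linarith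
      then have "x * (real i + 1) \<ge> x * (r * r / 4)" using x0 by (intro mult_left_mono) auto
      also have "x * (r * r / 4) = 2 * (a+4) * r" unfolding x_def using rpos by (simp add: field_simps)
      finally have "x * (real i + 1) \<ge> 2 * (a+4) * r" .
      moreover have "2 * (a+4) * r \<ge> 2 * (a+3) * r + 1" using r16 a0 by (simp add: algebra_simps)
      ultimately show ?thesis using i2 unfolding m_def by (simp add: algebra_simps)
    qed
    have "p (Suc i) * real (Suc i) = p i * (real n - real i)" unfolding p_def by (rule pmfB_rec[OF in_])
    moreover have "p i * (real n - real i) \<ge> p i * ((1 - x) * (real i + 1))"
      using key by (intro mult_left_mono) (auto simp: p_def)
    ultimately have "p (Suc i) * (real i + 1) \<ge> ((1 - x) * p i) * (real i + 1)" by (simp add: algebra_simps)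
    then show ?thesis by (simp add: mult_le_cancel_right add_pos_nonneg)
  qed
  have shift: "p (k + j) \<ge> (1 - x)^j * p k" if k1: "real k \<ge> m - r" and k2: "real k \<le> m + r" and j: "j \<le> J" for k j
    using j
  proof (induction j)
    case 0 then show ?case by simp
  next
    case (Suc j)
    have "real (k + j) \<le> m + (a+3) * r" using k2 Suc.prems J2 a0 rpos by (simp add: algebra_simps) 
    then have "p (Suc (k + j)) \<ge> (1 - x) * p (k + j)" using k1 by (intro ratio) auto
    moreover have "(1 - x) * p (k + j) \<ge> (1 - x) * ((1 - x)^j * p k)"
      using Suc x0 xh by (intro mult_left_mono) auto
    ultimately show ?case by simp
  qed
  define \<theta> where "\<theta> = exp (-16 * (a+4)^2)"
  have powx: "(1 - x)^J \<ge> \<theta>"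
  proof -
    have "ln (1 - x) \<ge> -2 * x"
    proof -
      have "2 * x * x \<le> 1 * x" using x0 xh by (intro mult_right_mono) auto
      then show ?thesis using ln_one_minus_pos_lower_bound[OF x0 xh] by (simp add: power2_eq_square)
    qed
    then have "real J * ln (1 - x) \<ge> real J * (-2 * x)" by (intro mult_left_mono) auto
    moreover have "real J * (2 * x) \<le> 16 * (a+4)^2"
    proof -
      have "real J * (2 * x) \<le> ((a+1) * r + 1) * (2 * x)" using J2 x0 by (intro mult_right_mono) auto
      also have "\<dots> = 16 * (a+4) * (a+1) + 16 * (a+4) / r" unfolding x_def using rpos by (simp add: field_simps)
      also have "16 * (a+4) / r \<le> 1" using r16 rpos by (simp add: divide_le_eq)
      finally show ?thesis using a0 by (simp add: power2_eq_square algebra_simps)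
    qed
    ultimately have "real J * ln (1 - x) \<ge> -16 * (a+4)^2" by linarith
    then have "exp (real J * ln (1 - x)) \<ge> \<theta>" unfolding \<theta>_def by simp
    moreover have "exp (real J * ln (1 - x)) = (1 - x)^J" using xh by (simp add: exp_of_nat_mult)
    ultimately show ?thesis by simp
  qed
  define W where "W = {k::nat. \<bar>real k - m\<bar> \<le> r}"
  have finW: "finite W"
  proof (rule finite_subset)
    show "W \<subseteq> {..nat \<lceil>m + r\<rceil>}" unfolding W_def by (auto simp: abs_le_iff) linarith
  qed auto
  have PW: "measure_pmf.prob (binomial_pmf n (1/2)) W \<ge> 1/2"
  proof -
    have "measure_pmf.prob (binomial_pmf n (1/2)) {k. r \<le> \<bar>real k - real n * (1/2)\<bar>} \<le> 2 * exp (-2 * r^2 / real n)"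
      by (rule binomial_distribution.prob_abs_ge) (auto simp: binomial_distribution_def npos rpos less_imp_le)
    also have "-2 * r^2 / real n = -2" using rr npos by (simp add: power2_eq_square)
    finally have "measure_pmf.prob (binomial_pmf n (1/2)) {k. r \<le> \<bar>real k - m\<bar>} \<le> 1/2"
      using exp_m2 unfolding m_def by simp
    moreover have "W = UNIV - {k. r < \<bar>real k - m\<bar>}" unfolding W_def by auto
    moreover have "measure_pmf.prob (binomial_pmf n (1/2)) {k. r < \<bar>real k - m\<bar>} \<le>
        measure_pmf.prob (binomial_pmf n (1/2)) {k. r \<le> \<bar>real k - m\<bar>}"
      by (intro measure_pmf.finite_measure_mono) auto
    moreover have "measure_pmf.prob (binomial_pmf n (1/2)) (UNIV - {k. r < \<bar>real k - m\<bar>}) =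
        1 - measure_pmf.prob (binomial_pmf n (1/2)) {k. r < \<bar>real k - m\<bar>}"
      using measure_pmf.prob_compl[of "{k. r < \<bar>real k - m\<bar>}" "binomial_pmf n (1/2)"] by simp
    ultimately show ?thesis by simp
  qed
  let ?T = "{k. real k \<ge> real n / 2 + a * sqrt (real n)}"
  have img: "(\<lambda>k. k + J) ` W \<subseteq> ?T"
  proof
    fix y assume "y \<in> (\<lambda>k. k + J) ` W"
    then obtain k where k: "k \<in> W" "y = k + J" by auto
    have "real k \<ge> m - r" using k(1) unfolding W_def by (auto simp: abs_le_iff)
    then have "real y \<ge> m - r + (a+1) * r" using J1 k(2) by simp
    then show "y \<in> ?T" unfolding m_def r_def by (simp add: algebra_simps)
  qed
  have "measure_pmf.prob (binomial_pmf n (1/2)) ?T \<ge> measure_pmf.prob (binomial_pmf n (1/2)) ((\<lambda>k. k + J) ` W)"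
    using img by (intro measure_pmf.finite_measure_mono) auto
  also have "measure_pmf.prob (binomial_pmf n (1/2)) ((\<lambda>k. k + J) ` W) = (\<Sum>k\<in>W. p (k + J))"
    using finW by (simp add: measure_measure_pmf_finite sum.reindex p_def)
  also have "(\<Sum>k\<in>W. p (k + J)) \<ge> (\<Sum>k\<in>W. \<theta> * p k)"
  proof (intro sum_mono)
    fix k assume k: "k \<in> W"
    have "p (k + J) \<ge> (1 - x)^J * p k" using k by (intro shift) (auto simp: W_def abs_le_iff)
    moreover have "(1 - x)^J * p k \<ge> \<theta> * p k" using powx by (intro mult_right_mono) (auto simp: p_def)
    ultimately show "\<theta> * p k \<le> p (k + J)" by simp
  qed
  also have "(\<Sum>k\<in>W. \<theta> * p k) = \<theta> * measure_pmf.prob (binomial_pmf n (1/2)) W"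
    using finW by (simp add: measure_measure_pmf_finite sum_distrib_left p_def)
  also have "\<dots> \<ge> \<theta> * (1/2)" using PW by (intro mult_left_mono) (auto simp: \<theta>_def)
  finally show "measure_pmf.prob (binomial_pmf n (1/2)) ?T \<ge> exp (-16 * (a+4)^2) / 2"
    by (simp add: \<theta>_def)
qed

lemma quad14:
  fixes n s a :: real
  assumes n: "n > 0" and a0: "0 \<le> a" and as: "a \<le> s" and sn: "s \<le> n" and an: "a \<le> n / 10"
  shows "14/10 * a \<le> 3/2 * s - s^2 / n"
proof -
  have "14/10 * a * n \<le> 3/2 * s * n - s^2"
  proof (cases "s \<le> 3/4 * n")
    case True
    have "(s - a) * (3/2 * n - s - a) \<ge> 0" using True as an by (intro mult_nonneg_nonneg) auto
    moreover have "a * (n/10 - a) \<ge> 0" using a0 an by (intro mult_nonneg_nonneg) auto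
    moreover have "3/2 * s * n - s^2 - 14/10 * a * n = (s - a) * (3/2 * n - s - a) + a * (n/10 - a)"
      by (simp add: field_simps power2_eq_square)
    ultimately show ?thesis by linarith
  next
    case False
    have s0: "s \<ge> 0" using a0 as by simp
    have "s * (3/2 * n - s) \<ge> s * (n / 2)" using sn s0 by (intro mult_left_mono) auto
    moreover have "s * (n / 2) \<ge> (3/4 * n) * (n / 2)" using False n by (intro mult_right_mono) auto
    moreover have "14/10 * a * n \<le> 14/10 * (n/10) * n" using an n by (intro mult_right_mono) auto
    moreover have "3/2 * s * n - s^2 = s * (3/2 * n - s)" by (simp add: field_simps power2_eq_square)
    moreover have "(3/4 * n) * (n / 2) - 14/10 * (n/10) * n = 47/200 * (n * n)" by (simp add: field_simps)
    moreover have "n * n \<ge> 0" by simp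
    ultimately show ?thesis by linarith
  qed
  then show ?thesis using n by (simp add: field_simps power2_eq_square)
qed

lemma drift_num:
  fixes n s A \<beta> Lam c1 c2 :: real
  assumes n1: "n \<ge> 1" and c1: "c1 > 0" and c2: "c2 > 0"
    and b0: "0 \<le> \<beta>" and b1: "\<beta> \<le> c1 * n powr (-1/2)"
    and L0: "0 \<le> Lam" and L1: "Lam \<le> c2 * n powr (-1/4)"
    and A0: "A \<ge> 0" and As: "A * sqrt n \<le> s" and sn: "s \<le> n" and An: "A * sqrt n \<le> n / 10"
    and AK: "2 * c1 + c2^2 + c1^2 \<le> A / 10"
  shows "13/10 * (A * sqrt n) \<le> 3/2 * s - s^2 / n - 2 * n * \<beta> - Lam^2 * n - n * \<beta>^2"
proof -
  define r where "r = sqrt n"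
  have r1: "r \<ge> 1" using n1 by (simp add: r_def)
  have rr: "r * r = n" using n1 by (simp add: r_def)
  have p2: "n powr (-1/2) = 1 / r"
    using n1 by (simp add: r_def powr_minus_divide powr_half_sqrt[symmetric])
  have p4: "(n powr (-1/4))^2 = 1 / r"
  proof -
    have "(n powr (-1/4))^2 = n powr (-1/4 + -1/4)" by (simp add: power2_eq_square powr_add[symmetric])
    also have "\<dots> = n powr (-1/2)" by simp
    finally show ?thesis using p2 by simp
  qed
  have t1: "2 * n * \<beta> \<le> 2 * c1 * r"
  proof -
    have "n * \<beta> \<le> n * (c1 / r)" using b1 p2 n1 by (intro mult_left_mono) auto
    also have "n * (c1 / r) = c1 * r" using rr r1 by (simp add: field_simps)
    finally show ?thesis by simp
  qed
  have t2: "Lam^2 * n \<le> c2^2 * r"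
  proof -
    have "Lam^2 \<le> (c2 * n powr (-1/4))^2" using L0 L1 by (intro power_mono) auto
    also have "\<dots> = c2^2 / r" using p4 by (simp add: power_mult_distrib)
    finally have "Lam^2 * n \<le> c2^2 / r * n" using n1 by (intro mult_right_mono) auto
    also have "c2^2 / r * n = c2^2 * r" using rr r1 by (simp add: field_simps)
    finally show ?thesis .
  qed
  have t3: "n * \<beta>^2 \<le> c1^2 * r"
  proof -
    have "\<beta>^2 \<le> (c1 / r)^2" using b0 b1 p2 by (intro power_mono) auto
    then have "n * \<beta>^2 \<le> n * (c1 / r)^2" using n1 by (intro mult_left_mono) auto
    also have "n * (c1 / r)^2 = c1^2" using rr[symmetric] r1 by (simp add: field_simps power2_eq_square)
    also have "c1^2 * 1 \<le> c1^2 * r" using r1 by (intro mult_left_mono) auto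
    then have "c1^2 \<le> c1^2 * r" by simp
    finally show ?thesis .
  qed
  have "(2 * c1 + c2^2 + c1^2) * r \<le> A / 10 * r" using AK r1 by (intro mult_right_mono) auto
  moreover have "14/10 * (A * r) \<le> 3/2 * s - s^2 / n"
    by (rule quad14) (use n1 A0 r1 As sn An in \<open>auto simp: r_def\<close>)
  ultimately show ?thesis using t1 t2 t3 unfolding r_def[symmetric] by (simp add: algebra_simps)
qed

lemma Dpos_nb:
  assumes fin: "finite S" and nb: "\<not> bipartite_on E S" and deg: "\<forall>u\<in>S. card (nbrs E S u) = D"
  shows "D > 0"
proof (rule ccontr)
  assume "\<not> D > 0"
  then have D0: "D = 0" by simp
  have "\<forall>u\<in>S. \<forall>v\<in>S. \<not> E u v"
  proof (intro ballI)
    fix u v assume u: "u \<in> S" and v: "v \<in> S"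
    have "finite (nbrs E S u)" using fin by (simp add: nbrs_def)
    moreover have "card (nbrs E S u) = 0" using deg u D0 by simp
    ultimately have "nbrs E S u = {}" by simp
    then show "\<not> E u v" using v by (auto simp: nbrs_def)
  qed
  then have "bipartite_on E S" unfolding bipartite_on_def by blast
  then show False using nb by simp
qed

lemma sum_sg_le:
  assumes "finite S" "\<tau> = 1 \<or> \<tau> = -1"
  shows "(\<Sum>u\<in>S. \<tau> * sg (c u)) \<le> real (card S)"
proof -
  have "(\<Sum>u\<in>S. \<tau> * sg (c u)) \<le> (\<Sum>u\<in>S. 1)" using assms(2) by (intro sum_mono) (auto simp: sg_def)
  then show ?thesis by simp
qed

lemma exp_A200: "A > 0 \<Longrightarrow> exp (- (A^2 / 200)) \<le> 200 / (A::real)^2"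
proof -
  assume A: "A > 0"
  define x where "x = A^2 / 200"
  have x: "x > 0" using A by (simp add: x_def)
  have "exp x \<ge> 1 + x" by (rule exp_ge_add_one_self)
  then have "exp x \<ge> x" by linarith
  then have "1 / exp x \<le> 1 / x" using x by (intro divide_left_mono) auto
  then show ?thesis by (simp add: x_def exp_minus field_simps)
qed


lemma main_fixed:
  fixes c1 c2 A0 \<theta> :: real and n d b :: nat and E :: "nat \<Rightarrow> nat \<Rightarrow> bool" and V1 V2 :: "nat set"
  assumes c1: "c1 > 0" and c2: "c2 > 0"
    and cr: "clustered_regular E V1 V2 n d b"
    and hb: "real b / real d \<le> c1 * real n powr (-1/2)"
    and hl: "cluster_lambda E V1 V2 \<le> c2 * real n powr (-1/4)"
    and A60: "A0 \<ge> 60" and AK0: "A0 \<ge> 10 * (2 * c1 + c2^2 + c1^2)"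
    and nb: "measure_pmf.prob (binomial_pmf n (1/2)) {k. real n / 2 + A0 / 2 * sqrt (real n) \<le> real k} \<ge> \<theta>"
    and th0: "\<theta> \<ge> 0"
    and ne1: "ln (real n) \<le> sqrt (real n) / 10" and ne2: "ln (ln (real n)) \<ge> ln (6/5)" and n3: "n \<ge> 3"
  shows "measure_pmf.prob (trajectory E (V1 \<union> V2) (nat \<lfloor>2 / ln (6/5) * ln (ln (real n))\<rfloor>))
      {cs. \<exists>t < length cs.
             real_of_int (bias V1 (cs ! t)) \<ge> sqrt (real n) * ln (real n) \<and>
             - real_of_int (bias V2 (cs ! t)) \<ge> sqrt (real n) * ln (real n)} \<ge> \<theta>^2 / 2"
proof -
  have f1: "finite V1" and f2: "finite V2" and disj: "V1 \<inter> V2 = {}" and cV1: "card V1 = n" and cV2: "card V2 = n"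
    and symE: "\<And>u v. E u v = E v u" and bd: "b \<le> d"
    and x1: "\<forall>u\<in>V1. card (nbrs E V2 u) = b" and x2: "\<forall>u\<in>V2. card (nbrs E V1 u) = b"
    and i1: "\<forall>u\<in>V1. card (nbrs E V1 u) = d - b" and i2: "\<forall>u\<in>V2. card (nbrs E V2 u) = d - b"
    and conn1: "connected_on E V1" and conn2: "connected_on E V2"
    and nb1: "\<not> bipartite_on E V1" and nb2: "\<not> bipartite_on E V2"
    using cr unfolding clustered_regular_def by auto
  have Dp: "d - b > 0" using Dpos_nb[OF f1 nb1 i1] .
  have npos: "n > 0" using n3 by simp
  interpret C1: clus E "V1 \<union> V2" V1 V2 n d b "d - b"
    by unfold_locales (use f1 f2 disj cV1 cV2 symE x1 x2 i1 bd Dp npos in auto)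
  interpret C2: clus E "V1 \<union> V2" V2 V1 n d b "d - b"
    by unfold_locales (use f1 f2 disj cV1 cV2 symE x1 x2 i2 bd Dp npos in auto)
  define Lam where "Lam = cluster_lambda E V1 V2"
  have Lam1: "max \<bar>eigs_desc (walk_matrix E V1) ! 1\<bar> \<bar>last (eigs_desc (walk_matrix E V1))\<bar> \<le> Lam"
    unfolding Lam_def cluster_lambda_def Let_def by (simp add: le_max_iff_disj) linarith
  have Lam2: "max \<bar>eigs_desc (walk_matrix E V2) ! 1\<bar> \<bar>last (eigs_desc (walk_matrix E V2))\<bar> \<le> Lam"
    unfolding Lam_def cluster_lambda_def Let_def by (simp add: le_max_iff_disj)
  have L0: "Lam \<ge> 0" using Lam1 by (meson abs_ge_zero max.coboundedI1 order.trans)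
  have rn: "sqrt (real n) * sqrt (real n) = real n" by simp
  define st where "st = two_choices_step E (V1 \<union> V2)"
  define Tg where "Tg = (\<lambda>c. sqrt (real n) * ln (real n) \<le> real_of_int (bias V1 c) \<and>
       sqrt (real n) * ln (real n) \<le> - real_of_int (bias V2 c))"
  define G where "G = (\<lambda>A c. A * sqrt (real n) \<le> (\<Sum>u\<in>V1. 1 * sg (c u)) \<and>
       A * sqrt (real n) \<le> (\<Sum>u\<in>V2. (-1) * sg (c u)))"
  have bias1: "real_of_int (bias V1 c) = (\<Sum>u\<in>V1. 1 * sg (c u))" for c using bias_sum[OF f1] by simp
  have bias2: "- real_of_int (bias V2 c) = (\<Sum>u\<in>V2. (-1) * sg (c u))" for c
    using bias_sum[OF f2] by (simp add: sum_negf)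
  have hitG: "Tg c" if "A \<ge> ln (real n)" "G A c" for A c
  proof -
    have "ln (real n) * sqrt (real n) \<le> A * sqrt (real n)" using that(1) by (intro mult_right_mono) auto
    then have "sqrt (real n) * ln (real n) \<le> A * sqrt (real n)" by (simp add: mult.commute)
    then show ?thesis using that(2) unfolding Tg_def G_def bias1 bias2 by linarith
  qed
  have stepG: "measure_pmf.prob (st c) {c'. \<not> G (6/5 * A) c'} \<le> 400 / A^2"
    if A0A: "A0 \<le> A" and AL: "A < ln (real n)" and GA: "G A c" and "\<not> Tg c" for A c
  proof -
    have Apos: "A > 0" using A0A A60 by simp
    have An: "A * sqrt (real n) \<le> real n / 10"
    proof -
      have "A * sqrt (real n) \<le> sqrt (real n) / 10 * sqrt (real n)" using AL ne1 by (intro mult_right_mono) auto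
      then show ?thesis using rn by simp
    qed
    have AK: "2 * c1 + c2^2 + c1^2 \<le> A / 10" using AK0 A0A by simp
    define \<epsilon> where "\<epsilon> = A * sqrt (real n) / 10"
    have eps0: "\<epsilon> \<ge> 0" using Apos by (simp add: \<epsilon>_def)
    have bnd_exp: "exp (- (\<epsilon>^2) / (2 * real n)) \<le> 200 / A^2"
    proof -
      have e2: "\<epsilon>^2 = A^2 * real n / 100" unfolding \<epsilon>_def by (simp add: power_mult_distrib power_divide)
      have "- (\<epsilon>^2) / (2 * real n) = - (A^2 / 200)"
        unfolding e2 using npos by (simp add: field_simps)
      then show ?thesis using exp_A200[OF Apos] by (simp only:)
    qed
    have n1: "real n \<ge> 1" using npos by simp
    have b0: "real b / real d \<ge> 0" by simp
    have P1: "measure_pmf.prob (st c) {c'. (\<Sum>u\<in>V1. 1 * sg (c' u)) \<le> 13/10 * (A * sqrt (real n)) - \<epsilon>} \<le> 200 / A^2"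
    proof -
      have LB: "13/10 * (A * sqrt (real n)) \<le> 3/2 * (\<Sum>u\<in>V1. 1 * sg (c u)) - (\<Sum>u\<in>V1. 1 * sg (c u))^2 / real n
          - 2 * real n * (real b / real d) - Lam^2 * real n - real n * (real b / real d)^2"
        by (rule drift_num[OF n1 c1 c2 b0 hb L0 hl[folded Lam_def]])
           (use Apos GA An AK sum_sg_le[OF f1, of 1 c] cV1 in \<open>auto simp: G_def\<close>)
      have "measure_pmf.prob (two_choices_step E (V1 \<union> V2) c) {c'. (\<Sum>u\<in>V1. 1 * sg (c' u)) \<le> 13/10 * (A * sqrt (real n)) - \<epsilon>}
          \<le> exp (- (\<epsilon>^2) / (2 * real n))"
        by (rule C1.step_prob[OF _ conn1 Lam1 eps0 LB]) simp
      then show ?thesis using bnd_exp unfolding st_def by linarith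
    qed
    have P2: "measure_pmf.prob (st c) {c'. (\<Sum>u\<in>V2. (-1) * sg (c' u)) \<le> 13/10 * (A * sqrt (real n)) - \<epsilon>} \<le> 200 / A^2"
    proof -
      have LB: "13/10 * (A * sqrt (real n)) \<le> 3/2 * (\<Sum>u\<in>V2. (-1) * sg (c u)) - (\<Sum>u\<in>V2. (-1) * sg (c u))^2 / real n
          - 2 * real n * (real b / real d) - Lam^2 * real n - real n * (real b / real d)^2"
        by (rule drift_num[OF n1 c1 c2 b0 hb L0 hl[folded Lam_def]])
           (use Apos GA An AK sum_sg_le[OF f2, of "-1" c] cV2 in \<open>auto simp: G_def\<close>)
      have "measure_pmf.prob (two_choices_step E (V1 \<union> V2) c) {c'. (\<Sum>u\<in>V2. (-1) * sg (c' u)) \<le> 13/10 * (A * sqrt (real n)) - \<epsilon>}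
          \<le> exp (- (\<epsilon>^2) / (2 * real n))"
        by (rule C2.step_prob[OF _ conn2 Lam2 eps0 LB]) simp
      then show ?thesis using bnd_exp unfolding st_def by linarith
    qed
    have sub: "{c'. \<not> G (6/5 * A) c'} \<subseteq>
        {c'. (\<Sum>u\<in>V1. 1 * sg (c' u)) \<le> 13/10 * (A * sqrt (real n)) - \<epsilon>} \<union>
        {c'. (\<Sum>u\<in>V2. (-1) * sg (c' u)) \<le> 13/10 * (A * sqrt (real n)) - \<epsilon>}"
      unfolding G_def \<epsilon>_def by auto
    have "measure_pmf.prob (st c) {c'. \<not> G (6/5 * A) c'} \<le>
        measure_pmf.prob (st c) ({c'. (\<Sum>u\<in>V1. 1 * sg (c' u)) \<le> 13/10 * (A * sqrt (real n)) - \<epsilon>} \<union>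
        {c'. (\<Sum>u\<in>V2. (-1) * sg (c' u)) \<le> 13/10 * (A * sqrt (real n)) - \<epsilon>})"
      using sub by (intro measure_pmf.finite_measure_mono) auto
    also have "\<dots> \<le> measure_pmf.prob (st c) {c'. (\<Sum>u\<in>V1. 1 * sg (c' u)) \<le> 13/10 * (A * sqrt (real n)) - \<epsilon>}
        + measure_pmf.prob (st c) {c'. (\<Sum>u\<in>V2. (-1) * sg (c' u)) \<le> 13/10 * (A * sqrt (real n)) - \<epsilon>}"
      by (rule measure_Un_le) auto
    also have "\<dots> \<le> 400 / A^2" using P1 P2 by simp
    finally show ?thesis .
  qed
  have A32: "A0 \<ge> 32" using A60 by simp
  define k where "k = nat \<lceil>ln (ln (real n)) / ln (6/5)\<rceil>"
  define T where "T = nat \<lfloor>2 / ln (6/5) * ln (ln (real n))\<rfloor>"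
  have l65: "ln (6/5::real) > 0" by simp
  have lnpos: "ln (real n) > 0" using n3 by simp
  have y1: "ln (ln (real n)) / ln (6/5) \<ge> 1" using ne2 l65 by simp
  have kT: "k \<le> T"
  proof -
    define y where "y = ln (ln (real n)) / ln (6/5)"
    have eq: "2 / ln (6/5) * ln (ln (real n)) = 2 * y" unfolding y_def by simp
    have "\<lceil>y\<rceil> \<le> \<lfloor>2 * y\<rfloor>"
    proof -
      have "real_of_int \<lceil>y\<rceil> < y + 1" by linarith
      also have "\<dots> \<le> 2 * y" using y1 y_def by linarith
      finally show ?thesis by (simp add: le_floor_iff)
    qed
    then have "nat \<lceil>y\<rceil> \<le> nat \<lfloor>2 * y\<rfloor>" by (rule nat_mono)
    then show ?thesis unfolding k_def T_def eq y_def[symmetric] .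
  qed
  have Lk: "ln (real n) \<le> A0 * (6/5)^k"
  proof -
    have "real k \<ge> ln (ln (real n)) / ln (6/5)" unfolding k_def by linarith
    then have "real k * ln (6/5) \<ge> ln (ln (real n))" using l65 by (simp add: divide_le_eq)
    then have "exp (real k * ln (6/5)) \<ge> exp (ln (ln (real n)))" by simp
    moreover have "exp (real k * ln (6/5)) = (6/5)^k" by (simp add: exp_of_nat_mult)
    moreover have "exp (ln (ln (real n))) = ln (real n)" using lnpos by simp
    ultimately have "ln (real n) \<le> (6/5)^k" by simp
    also have "(6/5::real)^k \<le> A0 * (6/5)^k" using A60 by simp
    finally show ?thesis .
  qed
  define t where "t = real n / 2 + A0 / 2 * sqrt (real n)"
  have PG: "measure_pmf.prob (init_config (V1 \<union> V2)) {c. G A0 c} \<ge> \<theta>^2"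
  proof -
    have "{c. t \<le> real (card {u\<in>V1. c u}) \<and> t \<le> real (card {u\<in>V2. \<not> c u})} \<subseteq> {c. G A0 c}"
    proof
      fix c assume "c \<in> {c. t \<le> real (card {u\<in>V1. c u}) \<and> t \<le> real (card {u\<in>V2. \<not> c u})}"
      then have h: "t \<le> real (card {u\<in>V1. c u})" "t \<le> real (card {u\<in>V2. \<not> c u})" by auto
      have "real_of_int (bias V1 c) = 2 * real (card {u\<in>V1. c u}) - real n" using bias_card[OF f1] cV1 by simp
      moreover have "- real_of_int (bias V2 c) = 2 * real (card {u\<in>V2. \<not> c u}) - real n" using bias_card'[OF f2] cV2 by simp
      ultimately show "c \<in> {c. G A0 c}" using h unfolding G_def t_def bias1[symmetric] bias2[symmetric] by simp
    qed
    then have "measure_pmf.prob (init_config (V1 \<union> V2)) {c. G A0 c} \<ge>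
        measure_pmf.prob (init_config (V1 \<union> V2)) {c. t \<le> real (card {u\<in>V1. c u}) \<and> t \<le> real (card {u\<in>V2. \<not> c u})}"
      by (intro measure_pmf.finite_measure_mono) auto
    also have "measure_pmf.prob (init_config (V1 \<union> V2)) {c. t \<le> real (card {u\<in>V1. c u}) \<and> t \<le> real (card {u\<in>V2. \<not> c u})}
        = (measure_pmf.prob (binomial_pmf n (1/2)) {k. real k \<ge> t})^2"
      by (rule init_two[OF f1 f2 disj cV1 cV2])
    also have "(measure_pmf.prob (binomial_pmf n (1/2)) {k. real k \<ge> t})^2 \<ge> \<theta>^2"
      using nb th0 unfolding t_def by (intro power_mono) auto
    finally show ?thesis .
  qed
  have "measure_pmf.prob (trajectory E (V1 \<union> V2) T) (Ev Tg) \<ge> measure_pmf.prob (trajectory E (V1 \<union> V2) k) (Ev Tg)"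
    unfolding trajectory_trajG using kT by (rule prob_trajG_mono')
  also have "measure_pmf.prob (trajectory E (V1 \<union> V2) k) (Ev Tg) =
      measure_pmf.expectation (init_config (V1 \<union> V2)) (\<lambda>c. measure_pmf.prob (trajG st (return_pmf c) k) (Ev Tg))"
    unfolding trajectory_trajG st_def by (rule prob_trajG_bind)
  also have "\<dots> \<ge> (1 - 1400 / A0^2) * measure_pmf.prob (init_config (V1 \<union> V2)) {c. G A0 c}"
  proof (rule expect_lower)
    show "1 - 1400 / A0^2 \<ge> 0"
    proof -
      have "A0^2 \<ge> 60^2" using A60 by (intro power_mono) auto
      then show ?thesis by (simp add: divide_le_eq)
    qed
    fix c assume "c \<in> {c. G A0 c}"
    then have GA0: "G A0 c" by simp
    show "measure_pmf.prob (trajG st (return_pmf c) k) (Ev Tg) \<ge> 1 - 1400 / A0^2"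
    proof (rule chain_induct[where L = "ln (real n)" and G = G and Tg = Tg and A0 = A0 and st = st])
      show "\<And>A c. ln (real n) \<le> A \<Longrightarrow> G A c \<Longrightarrow> Tg c" using hitG by blast
      show "\<And>A c. A0 \<le> A \<Longrightarrow> A < ln (real n) \<Longrightarrow> G A c \<Longrightarrow> \<not> Tg c \<Longrightarrow>
        measure_pmf.prob (st c) {c'. \<not> G (6/5 * A) c'} \<le> 400 / A^2" using stepG by blast
    qed (use A32 Lk GA0 in auto)
  qed auto
  also have "(1 - 1400 / A0^2) * measure_pmf.prob (init_config (V1 \<union> V2)) {c. G A0 c} \<ge> 1/2 * \<theta>^2"
  proof (rule mult_mono)
    have "A0^2 \<ge> 60^2" using A60 by (intro power_mono) auto
    then show "1/2 \<le> 1 - 1400 / A0^2" by (simp add: divide_le_eq)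
    show "0 \<le> 1 - 1400 / A0^2" using \<open>A0^2 \<ge> 60^2\<close> by (simp add: divide_le_eq)
  qed (use PG in auto)
  finally have "measure_pmf.prob (trajectory E (V1 \<union> V2) T) (Ev Tg) \<ge> \<theta>^2 / 2" by simp
  moreover have "Ev Tg = {cs. \<exists>t < length cs.
             real_of_int (bias V1 (cs ! t)) \<ge> sqrt (real n) * ln (real n) \<and>
             - real_of_int (bias V2 (cs ! t)) \<ge> sqrt (real n) * ln (real n)}"
    unfolding Ev_def Tg_def by simp
  ultimately show ?thesis unfolding T_def by simp
qed


theorem lemma4:
  fixes c1 c2 :: real
  assumes "c1 > 0" and "c2 > 0"
  shows "\<exists>p > 0. \<exists>C > 0. \<exists>N :: nat. \<forall>n \<ge> N. \<forall>(E :: nat \<Rightarrow> nat \<Rightarrow> bool) V1 V2 d b.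
    clustered_regular E V1 V2 n d b \<longrightarrow>
    real b / real d \<le> c1 * real n powr (-1/2) \<longrightarrow>
    cluster_lambda E V1 V2 \<le> c2 * real n powr (-1/4) \<longrightarrow>
    measure_pmf.prob (trajectory E (V1 \<union> V2) (nat \<lfloor>C * ln (ln (real n))\<rfloor>))
      {cs. \<exists>t < length cs.
             real_of_int (bias V1 (cs ! t)) \<ge> sqrt (real n) * ln (real n) \<and>
             - real_of_int (bias V2 (cs ! t)) \<ge> sqrt (real n) * ln (real n)} \<ge> p"
proof -
  define A0 where "A0 = max 60 (10 * (2 * c1 + c2^2 + c1^2))"
  have A60: "A0 \<ge> 60" and AK0: "A0 \<ge> 10 * (2 * c1 + c2^2 + c1^2)" by (simp_all add: A0_def)
  define \<theta> where "\<theta> = exp (-16 * (A0/2 + 4)^2) / 2"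
  have th0: "\<theta> > 0" by (simp add: \<theta>_def)
  obtain Nb where Nb: "\<And>n. n \<ge> Nb \<Longrightarrow>
      measure_pmf.prob (binomial_pmf n (1/2)) {k. real k \<ge> real n / 2 + A0 / 2 * sqrt (real n)} \<ge> \<theta>"
    using binom_anti[of "A0/2"] A60 unfolding \<theta>_def by auto
  have ev: "eventually (\<lambda>n::nat. ln (real n) \<le> sqrt (real n) / 10) at_top" by real_asymp
  moreover have ev2: "eventually (\<lambda>n::nat. ln (ln (real n)) \<ge> ln (6/5)) at_top" by real_asymp
  ultimately have "eventually (\<lambda>n::nat. ln (real n) \<le> sqrt (real n) / 10 \<and> ln (ln (real n)) \<ge> ln (6/5)) at_top"
    by (rule eventually_conj)
  then obtain Ne where Ne: "\<And>n. n \<ge> Ne \<Longrightarrow> ln (real n) \<le> sqrt (real n) / 10 \<and> ln (ln (real n)) \<ge> ln (6/5)"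
    unfolding eventually_at_top_linorder by blast
  have C0: "2 / ln (6/5::real) > 0" by simp
  have main: "\<forall>n \<ge> max (max Nb Ne) 3. \<forall>(E :: nat \<Rightarrow> nat \<Rightarrow> bool) V1 V2 d b.
    clustered_regular E V1 V2 n d b \<longrightarrow>
    real b / real d \<le> c1 * real n powr (-1/2) \<longrightarrow>
    cluster_lambda E V1 V2 \<le> c2 * real n powr (-1/4) \<longrightarrow>
    measure_pmf.prob (trajectory E (V1 \<union> V2) (nat \<lfloor>2 / ln (6/5::real) * ln (ln (real n))\<rfloor>))
      {cs. \<exists>t < length cs.
             real_of_int (bias V1 (cs ! t)) \<ge> sqrt (real n) * ln (real n) \<and>
             - real_of_int (bias V2 (cs ! t)) \<ge> sqrt (real n) * ln (real n)} \<ge> \<theta>^2 / 2"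
  proof (intro allI impI)
    fix n E V1 V2 d b
    assume n: "max (max Nb Ne) 3 \<le> n" and cr: "clustered_regular E V1 V2 n d b"
      and hb: "real b / real d \<le> c1 * real n powr (-1/2)"
      and hl: "cluster_lambda E V1 V2 \<le> c2 * real n powr (-1/4)"
    show "measure_pmf.prob (trajectory E (V1 \<union> V2) (nat \<lfloor>2 / ln (6/5::real) * ln (ln (real n))\<rfloor>))
      {cs. \<exists>t < length cs.
             real_of_int (bias V1 (cs ! t)) \<ge> sqrt (real n) * ln (real n) \<and>
             - real_of_int (bias V2 (cs ! t)) \<ge> sqrt (real n) * ln (real n)} \<ge> \<theta>^2 / 2"
      by (rule main_fixed[OF assms cr hb hl A60 AK0 Nb _ _ _ _])
         (use n Ne[of n] th0 in auto)
  qed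
  have p0: "\<theta>^2 / 2 > 0" using th0 by simp
  show ?thesis
    apply (rule exI[of _ "\<theta>^2 / 2"])
    apply (rule conjI[OF p0])
    apply (rule exI[of _ "2 / ln (6/5::real)"])
    apply (rule conjI[OF C0])
    apply (rule exI[of _ "max (max Nb Ne) 3"])
    apply (rule main)
    done
qed

end
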